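(* Let $R$ be a subring of the field $\bar{\mathbb{Q}}$ of algebraic numbers, let $S\subset\mathbb{N}$ be a $\Leftrightarrow_R$-connected subset, and let $T\subset S$. Suppose that for some $n\in S$ there are infinitely many elements $m\in T$ with $m\Leftrightarrow_R n$. Then the homomorphism $\tau^R_{S,T}\colon R[q]^S\to P_T(R)$ is injective. In particular, if $R$ is a subring of the ring of algebraic integers, then for any subset $T\subset\mathbb{N}$ containing infinitely many prime powers, $\tau^R_{\mathbb{N},T}\colon R[q]^{\mathbb{N}}\to P_T(R)$ is injective.
   Context: All rings are commutative with unit; $q$ is an indeterminate. For $n\in\mathbb{N}$, $\Phi_n(q)$ is the $n$th cyclotomic polynomial. For $S\subset\mathbb{N}$, $\Phi_S^*$ is the multiplicative subset of $\mathbb{Z}[q]$ generated by $\{\Phi_m(q):m\in S\}$, directed by divisibility, and $R[q]^S=\varprojlim_{f\in\Phi_S^*}R[q]/(f)$. For $T\subset S$, $P_T(R)=\prod_{m\in T}R[q]/(\Phi_m(q))$ and $\tau^R_{S,T}\colon R[q]^S\to P_T(R)$ is the homomorphism induced by $f(q)\mapsto (f(q)\bmod \Phi_m(q))_{m\in T}$. A ring $R$ is $p$-adically separated if $\bigcap_{j\ge0}p^jR=(0)$. For $m,m'\in\mathbb{N}$ write $m\Leftrightarrow_R m'$ if $m=m'$, or $m/m'$ is an integer power (positive or negative exponent) of a prime $p$ with $R$ $p$-adically separated, or $R=\{0\}$. A subset $S\subset\mathbb{N}$ is $\Leftrightarrow_R$-connected if it is nonempty and any two elements are joined by a finite chain in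 $S$ with consecutive elements related by $\Leftrightarrow_R$. *)

theory Defs
  imports "HOL-Analysis.Analysis" "HOL-Computational_Algebra.Computational_Algebra"
begin

text \<open>The n-th cyclotomic polynomial, viewed inside complex polynomials (it has integer
  coefficients).  Only used for n \<ge> 1.\<close>
definition cyclotomic_poly :: "nat \<Rightarrow> complex poly" where
  "cyclotomic_poly n =
     (\<Prod>k\<in>{k\<in>{1..n}. coprime k n}. [:- cis (2 * pi * real k / real n), 1:])"

definition coeffs_in :: "complex set \<Rightarrow> complex poly \<Rightarrow> bool" where
  "coeffs_in A p \<longleftrightarrow> (\<forall>i. coeff p i \<in> A)"

definition dvd_in :: "complex set \<Rightarrow> complex poly \<Rightarrow> complex poly \<Rightarrow> bool" where
  "dvd_in A f g \<longleftrightarrow> (\<exists>h. coeffs_in A h \<and> g = f * h)"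

definition subring_C :: "complex set \<Rightarrow> bool" where
  "subring_C R \<longleftrightarrow> 0 \<in> R \<and> 1 \<in> R \<and> (\<forall>x\<in>R. \<forall>y\<in>R. x + y \<in> R \<and> x * y \<in> R \<and> - x \<in> R)"

text \<open>The multiplicative subset \<Phi>_S^* generated by the \<Phi>_m, m \<in> S: all finite products
  (with repetition) of such cyclotomic polynomials, including the empty product 1.\<close>
definition Phi_star :: "nat set \<Rightarrow> complex poly set" where
  "Phi_star S = {prod_mset (image_mset cyclotomic_poly M) | M. set_mset M \<subseteq> S}"

text \<open>Elements of R[q]^S = lim_{f \<in> \<Phi>_S^*} R[q]/(f), represented by families x with
  x f \<in> R[q] a representative of the component in R[q]/(f); compatibility along the
  divisibility order (divisibility in Z[q]) of the index set.\<close>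
definition completion_elem :: "complex set \<Rightarrow> nat set \<Rightarrow> (complex poly \<Rightarrow> complex poly) \<Rightarrow> bool" where
  "completion_elem R S x \<longleftrightarrow>
     (\<forall>f\<in>Phi_star S. coeffs_in R (x f)) \<and>
     (\<forall>f\<in>Phi_star S. \<forall>f'\<in>Phi_star S. dvd_in \<int> f f' \<longrightarrow> dvd_in R f (x f' - x f))"

definition completion_eq :: "complex set \<Rightarrow> nat set \<Rightarrow> (complex poly \<Rightarrow> complex poly) \<Rightarrow> (complex poly \<Rightarrow> complex poly) \<Rightarrow> bool" where
  "completion_eq R S x y \<longleftrightarrow> (\<forall>f\<in>Phi_star S. dvd_in R f (x f - y f))"

text \<open>Equality of the images under \<tau>^R_{S,T} in P_T(R) = \<Pi>_{m\<in>T} R[q]/(\<Phi>_m).\<close>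
definition tau_eq :: "complex set \<Rightarrow> nat set \<Rightarrow> (complex poly \<Rightarrow> complex poly) \<Rightarrow> (complex poly \<Rightarrow> complex poly) \<Rightarrow> bool" where
  "tau_eq R T x y \<longleftrightarrow> (\<forall>m\<in>T. dvd_in R (cyclotomic_poly m) (x (cyclotomic_poly m) - y (cyclotomic_poly m)))"

definition tau_injective :: "complex set \<Rightarrow> nat set \<Rightarrow> nat set \<Rightarrow> bool" where
  "tau_injective R S T \<longleftrightarrow>
     (\<forall>x y. completion_elem R S x \<longrightarrow> completion_elem R S y \<longrightarrow> tau_eq R T x y \<longrightarrow> completion_eq R S x y)"

definition p_adically_separated :: "complex set \<Rightarrow> nat \<Rightarrow> bool" where
  "p_adically_separated R p \<longleftrightarrow> (\<Inter>j. {of_nat p ^ j * r | r. r \<in> R}) = {0}"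

definition equiv_R :: "complex set \<Rightarrow> nat \<Rightarrow> nat \<Rightarrow> bool" where
  "equiv_R R m m' \<longleftrightarrow> m = m' \<or>
     (\<exists>p k. prime p \<and> p_adically_separated R p \<and> (m = m' * p ^ k \<or> m' = m * p ^ k)) \<or>
     R = {0}"

definition equiv_R_connected :: "complex set \<Rightarrow> nat set \<Rightarrow> bool" where
  "equiv_R_connected R S \<longleftrightarrow> S \<noteq> {} \<and>
     (\<forall>a\<in>S. \<forall>b\<in>S. (\<lambda>u v. u \<in> S \<and> v \<in> S \<and> equiv_R R u v)\<^sup>*\<^sup>* a b)"

end

theory Submission
  imports Defs "HOL-Computational_Algebra.Field_as_Ring"
begin


lemma subring_Ints: "subring_C \<int>"
  unfolding subring_C_def by (auto intro: Ints_add Ints_mult Ints_minus)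

context fixes A assumes A: "subring_C A" begin

lemma sr_0[simp]: "0 \<in> A" and sr_1[simp]: "1 \<in> A"
  using A unfolding subring_C_def by auto

lemma sr_add: "x \<in> A \<Longrightarrow> y \<in> A \<Longrightarrow> x + y \<in> A"
  and sr_mult: "x \<in> A \<Longrightarrow> y \<in> A \<Longrightarrow> x * y \<in> A"
  and sr_uminus: "x \<in> A \<Longrightarrow> - x \<in> A"
  using A unfolding subring_C_def by auto

lemma sr_diff: "x \<in> A \<Longrightarrow> y \<in> A \<Longrightarrow> x - y \<in> A"
  using sr_add[of x "-y"] sr_uminus[of y] by simp

lemma sr_sum: "(\<And>i. i \<in> I \<Longrightarrow> f i \<in> A) \<Longrightarrow> sum f I \<in> A"
  by (induction I rule: infinite_finite_induct) (auto intro: sr_add)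

lemma sr_prod: "(\<And>i. i \<in> I \<Longrightarrow> f i \<in> A) \<Longrightarrow> prod f I \<in> A"
  by (induction I rule: infinite_finite_induct) (auto intro: sr_mult)

lemma sr_power: "x \<in> A \<Longrightarrow> x ^ n \<in> A"
  by (induction n) (auto intro: sr_mult)

lemma sr_of_nat: "of_nat n \<in> A"
  by (induction n) (auto intro: sr_add)

lemma sr_of_int: "of_int k \<in> A"
proof (cases "k \<ge> 0")
  case True then show ?thesis using sr_of_nat[of "nat k"] by simp
next
  case False then show ?thesis using sr_uminus[OF sr_of_nat[of "nat (-k)"]] by simp
qed

lemma sr_Ints: "x \<in> \<int> \<Longrightarrow> x \<in> A"
  by (auto elim: Ints_cases intro: sr_of_int)

lemma ci_0[simp]: "coeffs_in A 0" and ci_1[simp]: "coeffs_in A 1"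
  unfolding coeffs_in_def by (auto simp: coeff_1)

lemma ci_add: "coeffs_in A p \<Longrightarrow> coeffs_in A q \<Longrightarrow> coeffs_in A (p + q)"
  unfolding coeffs_in_def by (auto intro: sr_add)

lemma ci_uminus: "coeffs_in A p \<Longrightarrow> coeffs_in A (- p)"
  unfolding coeffs_in_def by (auto intro: sr_uminus)

lemma ci_diff: "coeffs_in A p \<Longrightarrow> coeffs_in A q \<Longrightarrow> coeffs_in A (p - q)"
  unfolding coeffs_in_def by (auto intro: sr_diff)

lemma ci_mult: "coeffs_in A p \<Longrightarrow> coeffs_in A q \<Longrightarrow> coeffs_in A (p * q)"
  unfolding coeffs_in_def coeff_mult by (auto intro!: sr_sum sr_mult)

lemma ci_smult: "c \<in> A \<Longrightarrow> coeffs_in A p \<Longrightarrow> coeffs_in A (smult c p)"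
  unfolding coeffs_in_def by (auto intro: sr_mult)

lemma ci_const: "c \<in> A \<Longrightarrow> coeffs_in A [:c:]"
  unfolding coeffs_in_def by (auto simp: coeff_pCons split: nat.splits)

lemma ci_pCons: "c \<in> A \<Longrightarrow> coeffs_in A p \<Longrightarrow> coeffs_in A (pCons c p)"
  unfolding coeffs_in_def by (auto simp: coeff_pCons split: nat.splits)

lemma ci_pCons_iff: "coeffs_in A (pCons c p) \<longleftrightarrow> c \<in> A \<and> coeffs_in A p"
  unfolding coeffs_in_def by (auto simp: coeff_pCons split: nat.splits)

lemma ci_monom: "c \<in> A \<Longrightarrow> coeffs_in A (monom c n)"
  unfolding coeffs_in_def by (auto simp: coeff_monom)

lemma ci_power: "coeffs_in A p \<Longrightarrow> coeffs_in A (p ^ n)"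
  by (induction n) (auto intro: ci_mult)

lemma ci_prod: "(\<And>i. i \<in> I \<Longrightarrow> coeffs_in A (f i)) \<Longrightarrow> coeffs_in A (prod f I)"
  by (induction I rule: infinite_finite_induct) (auto intro: ci_mult)

lemma ci_prod_list: "(\<And>x. x \<in> set xs \<Longrightarrow> coeffs_in A x) \<Longrightarrow> coeffs_in A (prod_list xs)"
  by (induction xs) (auto intro: ci_mult)

lemma ci_prod_mset: "(\<And>x. x \<in># M \<Longrightarrow> coeffs_in A x) \<Longrightarrow> coeffs_in A (prod_mset M)"
  by (induction M) (auto intro: ci_mult)

lemma ci_pcompose: "coeffs_in A p \<Longrightarrow> coeffs_in A q \<Longrightarrow> coeffs_in A (pcompose p q)"
  by (induction p) (auto simp: pcompose_pCons ci_pCons_iff intro!: ci_add ci_const ci_mult)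

lemma ci_Ints: "coeffs_in \<int> p \<Longrightarrow> coeffs_in A p"
  unfolding coeffs_in_def by (auto intro: sr_Ints)

lemma poly_in: "coeffs_in A p \<Longrightarrow> c \<in> A \<Longrightarrow> poly p c \<in> A"
  by (induction p) (auto simp: ci_pCons_iff intro!: sr_add sr_mult)

lemma coeffs_in_div_mod:
  assumes f: "lead_coeff f = 1" "coeffs_in A f" and g: "coeffs_in A g"
  shows "coeffs_in A (g div f) \<and> coeffs_in A (g mod f)"
proof -
  have f0: "f \<noteq> 0" using f by auto
  have "\<forall>g. coeffs_in A g \<longrightarrow> (g \<noteq> 0 \<longrightarrow> degree g < n) \<longrightarrow> coeffs_in A (g div f) \<and> coeffs_in A (g mod f)" for n
  proof (induction n)
    case 0
    then show ?case by auto
  next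
    case (Suc n)
    show ?case
    proof (intro allI impI)
      fix g assume g: "coeffs_in A g" and gd: "g \<noteq> 0 \<longrightarrow> degree g < Suc n"
      show "coeffs_in A (g div f) \<and> coeffs_in A (g mod f)"
      proof (cases "g = 0")
        case True then show ?thesis by simp
      next
        case False
        show ?thesis
        proof (cases "degree g < degree f")
          case True
          then show ?thesis using g by (simp add: div_poly_less mod_poly_less)
        next
          case False
          define c where "c = lead_coeff g"
          define d where "d = degree g - degree f"
          define g' where "g' = g - monom c d * f"
          have cA: "c \<in> A" using g unfolding c_def coeffs_in_def by auto
          have g'A: "coeffs_in A g'" unfolding g'_def
            by (intro ci_diff g ci_mult ci_monom cA f)
          have "degree (monom c d * f) \<le> degree (monom c d) + degree f" by (rule degree_mult_le)
          also have "\<dots> \<le> d + degree f" using degree_monom_le by simp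
          also have "\<dots> = degree g" using False d_def by simp
          finally have dg: "degree (monom c d * f) \<le> degree g" .
          have cg: "coeff (monom c d * f) (degree g) = c"
            using False f by (simp add: coeff_monom_mult d_def)
          have "coeff g' (degree g) = 0" unfolding g'_def c_def using cg c_def by simp
          moreover have "degree g' \<le> degree g" unfolding g'_def using dg by (simp add: degree_diff_le)
          ultimately have "g' = 0 \<or> degree g' < degree g"
            by (metis le_neq_implies_less leading_coeff_0_iff)
          then have "g' \<noteq> 0 \<longrightarrow> degree g' < n" using gd \<open>g \<noteq> 0\<close> by auto
          with Suc.IH g'A have IH: "coeffs_in A (g' div f) \<and> coeffs_in A (g' mod f)" by blast
          have geq: "g = g' + monom c d * f" unfolding g'_def by simp
          have "g div f = monom c d + g' div f" unfolding geq using f0 by simp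
          moreover have "g mod f = g' mod f" unfolding geq using f0 by simp
          ultimately show ?thesis using IH cA by (simp add: ci_add ci_monom)
        qed
      qed
    qed
  qed
  then show ?thesis using g by blast
qed

lemma dvd_in_iff:
  assumes f: "lead_coeff f = 1" "coeffs_in A f" and g: "coeffs_in A g"
  shows "dvd_in A f g \<longleftrightarrow> f dvd g"
proof
  assume "dvd_in A f g" then show "f dvd g" unfolding dvd_in_def by auto
next
  assume "f dvd g"
  then have "g = f * (g div f)" by simp
  then show "dvd_in A f g" unfolding dvd_in_def using coeffs_in_div_mod[OF f g] by blast
qed

end


definition prim :: "nat \<Rightarrow> complex set" where
  "prim n = {z. z ^ n = 1 \<and> (\<forall>d. z ^ d = 1 \<longrightarrow> n dvd d)}"

lemma pow_gcd_1:
  fixes z :: complex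
  assumes "z ^ a = 1" "z ^ b = 1" shows "z ^ gcd a b = 1"
proof (cases "a = 0")
  case True then show ?thesis using assms by simp
next
  case False
  then obtain x y where xy: "a * x = b * y + gcd a b" using bezout_nat by blast
  have "1 = z ^ (a * x)" using assms by (simp add: power_mult)
  also have "\<dots> = z ^ (b * y) * z ^ gcd a b" by (simp add: xy power_add)
  also have "\<dots> = z ^ gcd a b" using assms by (simp add: power_mult)
  finally show ?thesis by simp
qed

lemma prim_disj: "m \<noteq> n \<Longrightarrow> prim m \<inter> prim n = {}"
  unfolding prim_def by (auto intro: dvd_antisym)

lemma prim_sub: "n \<ge> 1 \<Longrightarrow> prim n \<subseteq> {z. z ^ n = 1}"
  unfolding prim_def by auto

lemma finite_prim: "n \<ge> 1 \<Longrightarrow> finite (prim n)"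
  using finite_subset[OF prim_sub finite_roots_unity[of n]] by simp

lemma cis_pow_eq_1: "n \<ge> 1 \<Longrightarrow> cis (2 * pi * real j / real n) = 1 \<longleftrightarrow> n dvd j"
proof -
  assume n: "n \<ge> 1"
  have "cis (2 * pi * real j / real n) = exp(2 * of_real pi * \<i> * of_nat j / of_nat n)"
    by (simp add: cis_conv_exp field_simps)
  then show ?thesis using complex_root_unity_eq_1[OF n, of j] by simp
qed

lemma cis_power_k: "cis (2 * pi * real k / real n) ^ d = cis (2 * pi * real (k * d) / real n)"
  unfolding Complex.DeMoivre by (rule arg_cong[where f=cis]) (simp add: field_simps)

lemma cis_in_prim:
  assumes n: "n \<ge> 1" and c: "coprime k n"
  shows "cis (2 * pi * real k / real n) \<in> prim n"
  unfolding prim_def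
proof (safe)
  show "cis (2 * pi * real k / real n) ^ n = 1"
    unfolding cis_power_k by (subst cis_pow_eq_1[OF n]) simp
next
  fix d assume "cis (2 * pi * real k / real n) ^ d = 1"
  then have "n dvd k * d" unfolding cis_power_k by (subst (asm) cis_pow_eq_1[OF n])
  then show "n dvd d" using c by (simp add: coprime_commute coprime_dvd_mult_right_iff)
qed

lemma bij_cis_prim:
  assumes n: "n \<ge> 1"
  shows "bij_betw (\<lambda>k. cis (2 * pi * real k / real n)) {k\<in>{1..n}. coprime k n} (prim n)"
  unfolding bij_betw_def
proof (intro conjI)
  have inj0: "inj_on (\<lambda>k. cis (2 * pi * real k / real n)) {..<n}"
    using Complex.bij_betw_roots_unity[of n] n by (auto simp: bij_betw_def)
  show "inj_on (\<lambda>k. cis (2 * pi * real k / real n)) {k\<in>{1..n}. coprime k n}"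
  proof (rule inj_onI)
    fix k l assume k: "k \<in> {k\<in>{1..n}. coprime k n}" and l: "l \<in> {k\<in>{1..n}. coprime k n}"
      and eq: "cis (2 * pi * real k / real n) = cis (2 * pi * real l / real n)"
    show "k = l"
    proof (cases "n = 1")
      case True then show ?thesis using k l by auto
    next
      case False
      then have "k \<noteq> n" "l \<noteq> n" using k l n by auto
      then have "k < n" "l < n" using k l by auto
      then show ?thesis using inj0 eq by (auto simp: inj_on_def)
    qed
  qed
  show "(\<lambda>k. cis (2 * pi * real k / real n)) ` {k\<in>{1..n}. coprime k n} = prim n"
  proof
    show "(\<lambda>k. cis (2 * pi * real k / real n)) ` {k\<in>{1..n}. coprime k n} \<subseteq> prim n"
      using cis_in_prim[OF n] by auto
  next
    show "prim n \<subseteq> (\<lambda>k. cis (2 * pi * real k / real n)) ` {k\<in>{1..n}. coprime k n}"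
    proof
      fix z assume z: "z \<in> prim n"
      then have "z ^ n = 1" unfolding prim_def by auto
      then obtain j where j: "j < n" "z = cis (2 * pi * real j / real n)"
        using Complex.bij_betw_roots_unity[of n] n unfolding bij_betw_def by auto
      show "z \<in> (\<lambda>k. cis (2 * pi * real k / real n)) ` {k\<in>{1..n}. coprime k n}"
      proof (cases "j = 0")
        case True
        then have "z ^ 1 = 1" using j by simp
        then have "n dvd 1" using z unfolding prim_def by blast
        then have "n = 1" by simp
        then show ?thesis using j True by (auto intro!: image_eqI[of _ _ 1])
      next
        case False
        define g where "g = gcd j n"
        have g0: "g > 0" using n unfolding g_def by simp
        have "z ^ (n div g) = cis (2 * pi * real (j * (n div g)) / real n)"
          using j cis_power_k by simp
        also have "j * (n div g) = n * (j div g)"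
          unfolding g_def by (metis dvd_div_mult dvd_mult_div_cancel gcd_dvd1 gcd_dvd2 mult.commute)
        also have "cis (2 * pi * real (n * (j div g)) / real n) = 1"
          by (subst cis_pow_eq_1[OF n]) simp
        finally have "n dvd n div g" using z unfolding prim_def by auto
        moreover obtain m where m: "n = g * m" unfolding g_def by (metis gcd_dvd2 dvdE)
        ultimately have "n dvd m" using g0 by simp
        moreover have "m > 0" using m n by (cases m) auto
        ultimately have "g * m \<le> 1 * m" using m dvd_imp_le by simp
        then have "g \<le> 1" using \<open>m > 0\<close> by simp
        then have "g = 1" using g0 by simp
        then have "coprime j n" unfolding g_def by (simp add: coprime_iff_gcd_eq_1)
        then show ?thesis using j False by auto
      qed
    qed
  qed
qed

lemma cyclo_prim: "n \<ge> 1 \<Longrightarrow> cyclotomic_poly n = (\<Prod>z\<in>prim n. [:-z, 1:])"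
  unfolding cyclotomic_poly_def
  using prod.reindex_bij_betw[OF bij_cis_prim, of n "\<lambda>z. [:-z, 1:]"] by simp



abbreviation Phi :: "nat \<Rightarrow> complex poly" where "Phi \<equiv> cyclotomic_poly"

lemma roots_dvd:
  fixes g :: "complex poly"
  assumes "finite A" "\<forall>a\<in>A. poly g a = 0"
  shows "(\<Prod>a\<in>A. [:-a, 1:]) dvd g"
  using assms
proof (induction A arbitrary: g rule: finite_induct)
  case empty then show ?case by simp
next
  case (insert a A)
  have "poly g a = 0" using insert.prems by simp
  then have "[:-a, 1:] dvd g" by (simp only: poly_eq_0_iff_dvd)
  then obtain g' where g': "g = [:-a, 1:] * g'" by (elim dvdE)
  have "\<forall>b\<in>A. poly g' b = 0"
  proof
    fix b assume b: "b \<in> A"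
    then have "b \<noteq> a" using insert.hyps by auto
    moreover have "poly g b = 0" using insert.prems b by simp
    moreover have "poly g b = (b - a) * poly g' b" unfolding g' poly_mult by simp
    ultimately show "poly g' b = 0" by simp
  qed
  then have "(\<Prod>a\<in>A. [:-a, 1:]) dvd g'" using insert.IH by blast
  then have "[:-a, 1:] * (\<Prod>a\<in>A. [:-a, 1:]) dvd [:-a, 1:] * g'" by (rule mult_dvd_mono[OF dvd_refl])
  moreover have "(\<Prod>x\<in>insert a A. [:-x, 1:]) = [:-a, 1:] * (\<Prod>x\<in>A. [:-x, 1::complex:])"
    using insert.hyps by (rule prod.insert)
  ultimately show ?case using g' by simp
qed

lemma degree_prod_lin: "finite A \<Longrightarrow> degree (\<Prod>a\<in>A. [:-a, 1::complex:]) = card A"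
  by (subst degree_prod_eq_sum_degree) auto

lemma monic_eq_prod:
  fixes f :: "complex poly"
  assumes A: "finite A" and f: "lead_coeff f = 1" "degree f = card A" "\<forall>a\<in>A. poly f a = 0"
  shows "f = (\<Prod>a\<in>A. [:-a, 1:])"
proof -
  let ?P = "(\<Prod>a\<in>A. [:-a, 1::complex:])"
  obtain h where h: "f = ?P * h" using roots_dvd[OF A f(3)] by (elim dvdE)
  have f0: "f \<noteq> 0" using f by auto
  then have h0: "h \<noteq> 0" using h by auto
  have P0: "?P \<noteq> 0" using A by (simp add: prod_zero_iff)
  have "degree f = degree ?P + degree h" using h degree_mult_eq[OF P0 h0] by simp
  then have "degree h = 0" using degree_prod_lin[OF A] f by simp
  then obtain c where c: "h = [:c:]" by (elim degree_eq_zeroE)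
  have lP: "lead_coeff ?P = 1" by (simp add: lead_coeff_prod)
  have "lead_coeff f = lead_coeff ?P * lead_coeff h" using h by (simp add: lead_coeff_mult)
  then have "c = 1" using f lP c by simp
  then show ?thesis using h c by simp
qed

lemma cyclo_monic: "n \<ge> 1 \<Longrightarrow> lead_coeff (Phi n) = 1"
  by (simp add: cyclo_prim lead_coeff_prod)

lemma cyclo_ne0: "n \<ge> 1 \<Longrightarrow> Phi n \<noteq> 0"
  using cyclo_monic by fastforce

lemma cyclo_root: "n \<ge> 1 \<Longrightarrow> poly (Phi n) w = 0 \<longleftrightarrow> w \<in> prim n"
  by (simp add: cyclo_prim poly_prod prod_zero_iff finite_prim)

lemma cyclo_coprime:
  assumes "m \<ge> 1" "n \<ge> 1" "m \<noteq> n"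
  shows "coprime (Phi m) (Phi n)"
  unfolding coprime_def
proof (intro allI impI)
  fix c assume c: "c dvd Phi m" "c dvd Phi n"
  have c0: "c \<noteq> 0" using c cyclo_ne0 assms by auto
  show "is_unit c"
  proof (rule ccontr)
    assume "\<not> is_unit c"
    then have "degree c \<noteq> 0" using is_unit_iff_degree[OF c0] by simp
    have "\<exists>z. poly c z = 0" by (rule fundamental_theorem_of_algebra) (simp add: constant_degree \<open>degree c \<noteq> 0\<close>)
    then obtain z where z: "poly c z = 0" by blast
    have "poly (Phi m) z = 0" "poly (Phi n) z = 0" using z c by (auto elim!: dvdE)
    then have "z \<in> prim m \<inter> prim n" using cyclo_root assms by auto
    then show False using prim_disj assms by auto
  qed
qed

lemma cyclo_pow_prod_dvd:
  fixes g :: "complex poly"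
  assumes "finite I" "\<forall>s\<in>I. s \<ge> 1" "\<forall>s\<in>I. Phi s ^ c s dvd g"
  shows "(\<Prod>s\<in>I. Phi s ^ c s) dvd g"
  using assms
proof (induction I rule: finite_induct)
  case empty then show ?case by simp
next
  case (insert s I)
  have "coprime (Phi s ^ c s) (\<Prod>s\<in>I. Phi s ^ c s)"
    by (rule prod_coprime_right[of I "Phi s ^ c s" "\<lambda>s. Phi s ^ c s"]) (use insert cyclo_coprime in \<open>auto simp: coprime_power_left_iff coprime_power_right_iff\<close>)
  then show ?case using insert by (simp add: divides_mult)
qed

lemma root_order:
  fixes z :: complex
  assumes n: "n \<ge> 1" and z: "z ^ n = 1"
  shows "\<exists>d. d dvd n \<and> z \<in> prim d"
proof -
  define d where "d = (LEAST d. d > 0 \<and> z ^ d = 1)"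
  have d: "d > 0 \<and> z ^ d = 1" unfolding d_def by (rule LeastI[of _ n]) (use n z in auto)
  have "d dvd e" if e: "z ^ e = 1" for e
  proof -
    have g: "z ^ gcd e d = 1" using pow_gcd_1 e d by blast
    have "gcd e d > 0" using d by simp
    then have "d \<le> gcd e d" using g unfolding d_def by (intro Least_le) simp
    moreover have "gcd e d \<le> d" using d by (simp add: gcd_le2_nat)
    ultimately have "gcd e d = d" by simp
    then show ?thesis by (metis gcd_dvd1)
  qed
  then show ?thesis using d z unfolding prim_def by auto
qed

lemma roots_unity_union: "n \<ge> 1 \<Longrightarrow> {z::complex. z ^ n = 1} = (\<Union>d\<in>{d. d dvd n}. prim d)"
  using root_order unfolding prim_def by (auto elim!: dvdE simp: power_mult)

lemma monom_minus_1:
  assumes n: "n \<ge> 1"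
  shows "lead_coeff (monom 1 n - 1 :: complex poly) = 1" "degree (monom 1 n - 1 :: complex poly) = n"
proof -
  have "degree (monom 1 n - 1 :: complex poly) \<le> n"
    by (intro degree_diff_le) (simp_all add: degree_monom_eq)
  moreover have "coeff (monom 1 n - 1 :: complex poly) n = 1" using n by (simp add: coeff_1)
  ultimately show d: "degree (monom 1 n - 1 :: complex poly) = n"
    using le_degree[of "monom 1 n - 1 :: complex poly" n] by simp
  show "lead_coeff (monom 1 n - 1 :: complex poly) = 1" unfolding d using n by (simp add: coeff_1)
qed

lemma xn_minus_1_roots:
  assumes n: "n \<ge> 1"
  shows "(monom 1 n - 1 :: complex poly) = (\<Prod>z\<in>{z. z ^ n = 1}. [:-z, 1:])"
  by (rule monic_eq_prod) (use n monom_minus_1[OF n] card_roots_unity_eq[of n] finite_roots_unity[of n]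
      in \<open>auto simp: poly_monom\<close>)

lemma xn_minus_1_cyclo:
  assumes n: "n \<ge> 1"
  shows "(monom 1 n - 1 :: complex poly) = (\<Prod>d\<in>{d. d dvd n}. Phi d)"
proof -
  have fin: "finite {d. d dvd n}" using n by simp
  have "(monom 1 n - 1 :: complex poly) = (\<Prod>z\<in>(\<Union>d\<in>{d. d dvd n}. prim d). [:-z, 1:])"
    using xn_minus_1_roots[OF n] roots_unity_union[OF n] by simp
  also have "\<dots> = (\<Prod>d\<in>{d. d dvd n}. (\<Prod>z\<in>prim d. [:-z, 1:]))"
  proof (rule prod.UNION_disjoint_family[OF fin])
    show "\<forall>i\<in>{d. d dvd n}. finite (prim i)"
      using n by (auto intro!: finite_prim dest: dvd_imp_le simp: Suc_le_eq)
    show "disjoint_family_on prim {d. d dvd n}"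
      unfolding disjoint_family_on_def using prim_disj by auto
  qed
  also have "\<dots> = (\<Prod>d\<in>{d. d dvd n}. Phi d)"
    by (rule prod.cong) (use n in \<open>auto simp: cyclo_prim Suc_le_eq intro!: gr0I\<close>)
  finally show ?thesis .
qed

lemma cyclo_int: "n \<ge> 1 \<Longrightarrow> coeffs_in \<int> (Phi n)"
proof (induction n rule: less_induct)
  case (less n)
  define G where "G = (\<Prod>d\<in>{d. d dvd n} - {n}. Phi d)"
  have fin: "finite {d. d dvd n}" using less by simp
  have dl: "d < n \<and> d \<ge> 1" if "d \<in> {d. d dvd n} - {n}" for d
  proof -
    have "d dvd n" "d \<noteq> n" using that by auto
    moreover have "d \<noteq> 0" using \<open>d dvd n\<close> less.prems by (intro notI) simp
    ultimately show ?thesis using dvd_imp_le[of d n] less.prems by auto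
  qed
  have eq: "(monom 1 n - 1 :: complex poly) = Phi n * G"
    unfolding G_def xn_minus_1_cyclo[OF less.prems] using prod.remove[OF fin, of n Phi] by simp
  have Gm: "lead_coeff G = 1" unfolding G_def lead_coeff_prod by (rule prod.neutral) (metis dl cyclo_monic)
  have Gi: "coeffs_in \<int> G" unfolding G_def by (rule ci_prod[OF subring_Ints]) (use dl less.IH in auto)
  have G0: "G \<noteq> 0" using Gm by auto
  have "Phi n = (monom 1 n - 1) div G" using eq G0 by simp
  moreover have "coeffs_in \<int> (monom 1 n - 1 :: complex poly)"
    by (intro ci_diff[OF subring_Ints] ci_monom[OF subring_Ints] ci_1[OF subring_Ints]) simp
  ultimately show ?case using coeffs_in_div_mod[OF subring_Ints Gm Gi] by simp
qed



lemma comp_lin: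
  fixes z :: complex
  assumes z: "z \<noteq> 0" and p: "p \<ge> 1"
  shows "[:-z, 1:] \<circ>\<^sub>p monom 1 p = (\<Prod>w\<in>{w. w ^ p = z}. [:-w, 1:])"
proof -
  have eq: "[:-z, 1:] \<circ>\<^sub>p monom 1 p = monom 1 p + [:-z:]"
    by (simp add: pcompose_pCons add.commute)
  have d: "degree (monom 1 p + [:-z:]) = p" using p by (simp add: degree_add_eq_left degree_monom_eq)
  have c0: "coeff [:-z:] p = 0" using p by (cases p) auto
  have l: "lead_coeff (monom 1 p + [:-z:]) = 1" unfolding d using p c0 by simp
  show ?thesis unfolding eq
    by (rule monic_eq_prod) (use z p d l card_nth_roots[of z p] finite_nth_roots[of p z] in \<open>auto simp: poly_monom\<close>)
qed

lemma cyclo_comp: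
  assumes n: "n \<ge> 1" and p: "p \<ge> 1"
  shows "Phi n \<circ>\<^sub>p monom 1 p = (\<Prod>w\<in>{w. w ^ p \<in> prim n}. [:-w, 1:])"
proof -
  have nz: "z \<noteq> 0" if "z \<in> prim n" for z using that n unfolding prim_def by (auto simp: power_0_left)
  have "Phi n \<circ>\<^sub>p monom 1 p = (\<Prod>z\<in>prim n. [:-z, 1:] \<circ>\<^sub>p monom 1 p)"
    unfolding cyclo_prim[OF n] by (rule pcompose_prod)
  also have "\<dots> = (\<Prod>z\<in>prim n. (\<Prod>w\<in>{w. w ^ p = z}. [:-w, 1:]))"
    by (rule prod.cong) (use comp_lin nz p in auto)
  also have "\<dots> = (\<Prod>w\<in>(\<Union>z\<in>prim n. {w. w ^ p = z}). [:-w, 1:])"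
  proof (rule prod.UNION_disjoint_family[symmetric])
    show "finite (prim n)" using finite_prim n by simp
    show "\<forall>i\<in>prim n. finite {w. w ^ p = i}" using finite_nth_roots p by auto
    show "disjoint_family_on (\<lambda>z. {w. w ^ p = z}) (prim n)"
      unfolding disjoint_family_on_def by auto
  qed
  also have "(\<Union>z\<in>prim n. {w. w ^ p = z}) = {w. w ^ p \<in> prim n}" by auto
  finally show ?thesis .
qed

lemma L1: "w \<in> prim (n * p) \<Longrightarrow> p > 0 \<Longrightarrow> w ^ p \<in> prim n"
  unfolding prim_def
proof safe
  assume "w ^ (n * p) = 1" then show "(w ^ p) ^ n = 1" by (simp add: power_mult[symmetric] mult.commute)
next
  fix d assume h: "\<forall>d. w ^ d = 1 \<longrightarrow> n * p dvd d" "(w ^ p) ^ d = 1" "p > 0"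
  then have "n * p dvd p * d" by (simp add: power_mult)
  then show "n dvd d" using h(3) by (simp add: mult.commute)
qed

lemma L2:
  assumes p: "prime p" and pn: "p dvd n" and n: "n \<ge> 1" and w: "w ^ p \<in> prim n"
  shows "w \<in> prim (n * p)"
  unfolding prim_def
proof safe
  show "w ^ (n * p) = 1" using w unfolding prim_def by (simp add: power_mult[symmetric] mult.commute)
next
  fix d assume d: "w ^ d = 1"
  then have "(w ^ p) ^ d = 1" by (metis power_mult mult.commute power_one)
  then have "n dvd d" using w unfolding prim_def by auto
  then obtain d' where d': "d = n * d'" by (elim dvdE)
  show "n * p dvd d"
  proof (cases "p dvd d'")
    case True then show ?thesis using d' by auto
  next
    case False
    then have "coprime d' p" using p prime_imp_coprime[of p] by (metis coprime_commute)
    then have g: "gcd (n * d') (n * p) = n" by (simp add: gcd_mult_distrib_nat[symmetric])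
    have "w ^ (n * p) = 1" using w unfolding prim_def by (simp add: power_mult[symmetric] mult.commute)
    then have "w ^ gcd (n * d') (n * p) = 1" using pow_gcd_1 d d' by blast
    then have wn: "w ^ n = 1" using g by simp
    obtain m where m: "n = p * m" using pn by (elim dvdE)
    have "(w ^ p) ^ m = 1" using wn m by (simp add: power_mult)
    then have "n dvd m" using w unfolding prim_def by auto
    moreover have "m > 0" using m n by (cases m) auto
    moreover have "p > 1" using prime_gt_1_nat[OF p] by simp
    ultimately have "p * m \<le> 1 * m" using m dvd_imp_le[of n m] by simp
    then have "p \<le> 1" using \<open>m > 0\<close> by simp
    then show ?thesis using \<open>p > 1\<close> by simp
  qed
qed

lemma L3:
  assumes p: "prime p" and pn: "\<not> p dvd n" and w: "w \<in> prim n"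
  shows "w ^ p \<in> prim n"
  unfolding prim_def
proof safe
  have "w ^ n = 1" using w unfolding prim_def by simp
  then show "(w ^ p) ^ n = 1" by (metis power_mult mult.commute power_one)
next
  fix d assume "(w ^ p) ^ d = 1"
  then have "n dvd p * d" using w unfolding prim_def by (auto simp: power_mult[symmetric])
  moreover have "coprime n p" using p pn prime_imp_coprime[of p] by (metis coprime_commute)
  ultimately show "n dvd d" by (simp add: coprime_dvd_mult_right_iff)
qed

lemma L4:
  assumes p: "prime p" and pn: "\<not> p dvd n" and w: "w ^ p \<in> prim n" and nw: "w \<notin> prim (n * p)"
  shows "w \<in> prim n"
proof -
  have wnp: "w ^ (n * p) = 1" using w unfolding prim_def by (simp add: power_mult[symmetric] mult.commute)
  then obtain d where d: "w ^ d = 1" "\<not> n * p dvd d" using nw unfolding prim_def by auto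
  have dv: "n dvd e" if "w ^ e = 1" for e
  proof -
    have "(w ^ p) ^ e = 1" using that by (metis power_mult mult.commute power_one)
    then show ?thesis using w unfolding prim_def by auto
  qed
  obtain d' where d': "d = n * d'" using dv[OF d(1)] by (elim dvdE)
  have "\<not> p dvd d'" using d d' by auto
  then have "coprime d' p" using p prime_imp_coprime[of p] by (metis coprime_commute)
  then have g: "gcd (n * d') (n * p) = n" by (simp add: gcd_mult_distrib_nat[symmetric])
  have "w ^ gcd (n * d') (n * p) = 1" using pow_gcd_1 d(1) d' wnp by blast
  then have "w ^ n = 1" using g by simp
  then show ?thesis unfolding prim_def using dv by auto
qed

lemma comp_set_dvd:
  assumes p: "prime p" and pn: "p dvd n" and n: "n \<ge> 1"
  shows "{w. w ^ p \<in> prim n} = prim (n * p)"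
proof (rule set_eqI, rule iffI)
  fix w assume "w \<in> {w. w ^ p \<in> prim n}" then show "w \<in> prim (n * p)" using L2[OF p pn n] by simp
next
  fix w assume "w \<in> prim (n * p)" then show "w \<in> {w. w ^ p \<in> prim n}" using L1 prime_gt_0_nat[OF p] by simp
qed

lemma comp_set_ndvd:
  assumes p: "prime p" and pn: "\<not> p dvd n"
  shows "{w. w ^ p \<in> prim n} = prim n \<union> prim (n * p)"
proof (rule set_eqI, rule iffI)
  fix w assume "w \<in> {w. w ^ p \<in> prim n}" then show "w \<in> prim n \<union> prim (n * p)" using L4[OF p pn] by blast
next
  fix w assume "w \<in> prim n \<union> prim (n * p)" then show "w \<in> {w. w ^ p \<in> prim n}" 
    using L1[of w n p] L3[OF p pn, of w] prime_gt_0_nat[OF p] by blast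
qed

lemma cyclo_comp_dvd:
  assumes p: "prime p" and pn: "p dvd n" and n: "n \<ge> 1"
  shows "Phi n \<circ>\<^sub>p monom 1 p = Phi (n * p)"
proof -
  have "n * p \<ge> 1" using n prime_gt_0_nat[OF p] by (simp add: one_le_mult_iff)
  then show ?thesis
    using cyclo_comp[OF n] comp_set_dvd[OF p pn n] cyclo_prim p by (simp add: prime_ge_1_nat)
qed

lemma cyclo_comp_ndvd:
  assumes p: "prime p" and pn: "\<not> p dvd n" and n: "n \<ge> 1"
  shows "Phi n \<circ>\<^sub>p monom 1 p = Phi n * Phi (n * p)"
proof -
  have np: "n * p \<ge> 1" using n prime_gt_0_nat[OF p] by (simp add: one_le_mult_iff)
  have p1: "p > 1" using prime_gt_1_nat[OF p] by simp
  have disj: "prim n \<inter> prim (n * p) = {}" using prim_disj[of n "n * p"] n p1 by auto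
  have "Phi n \<circ>\<^sub>p monom 1 p = (\<Prod>w\<in>prim n \<union> prim (n * p). [:-w, 1:])"
    using cyclo_comp[OF n] comp_set_ndvd[OF p pn] p1 by simp
  also have "\<dots> = (\<Prod>w\<in>prim n. [:-w, 1:]) * (\<Prod>w\<in>prim (n * p). [:-w, 1:])"
    by (rule prod.union_disjoint) (use finite_prim n np disj in auto)
  also have "\<dots> = Phi n * Phi (n * p)" using cyclo_prim n np by simp
  finally show ?thesis .
qed



lemma binom_p:
  fixes x y :: "'a::comm_semiring_1"
  assumes p: "prime p"
  shows "(x + y) ^ p = x ^ p + y ^ p +
           of_nat p * (\<Sum>k<p-1. of_nat ((p choose Suc k) div p) * x ^ Suc k * y ^ (p - Suc k))"
proof -
  obtain m where m: "p = Suc m" using prime_gt_0_nat[OF p] by (cases p) auto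
  have "(x + y) ^ p = (\<Sum>k\<le>p. of_nat (p choose k) * x ^ k * y ^ (p - k))" by (rule binomial_ring)
  also have "\<dots> = y ^ p + (\<Sum>i\<le>m. of_nat (p choose Suc i) * x ^ Suc i * y ^ (p - Suc i))"
    unfolding m sum.atMost_Suc_shift by simp
  also have "(\<Sum>i\<le>m. of_nat (p choose Suc i) * x ^ Suc i * y ^ (p - Suc i)) =
       (\<Sum>i<m. of_nat (p choose Suc i) * x ^ Suc i * y ^ (p - Suc i)) + x ^ p"
    unfolding lessThan_Suc_atMost[symmetric] sum.lessThan_Suc using m by simp
  also have "(\<Sum>i<m. of_nat (p choose Suc i) * x ^ Suc i * y ^ (p - Suc i)) =
      of_nat p * (\<Sum>k<p-1. of_nat ((p choose Suc k) div p) * x ^ Suc k * y ^ (p - Suc k))"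
    unfolding sum_distrib_left
  proof (rule sum.cong)
    show "{..<m} = {..<p-1}" using m by simp
  next
    fix i assume "i \<in> {..<p-1}"
    then have "Suc i < p" by auto
    then have "p dvd (p choose Suc i)" using dvd_choose_prime[of "Suc i" p] p by auto
    then have "(p choose Suc i) = p * ((p choose Suc i) div p)" by simp
    then have "(of_nat (p choose Suc i) :: 'a) = of_nat p * of_nat ((p choose Suc i) div p)"
      by (metis of_nat_mult)
    then show "of_nat (p choose Suc i) * x ^ Suc i * y ^ (p - Suc i) =
          of_nat p * (of_nat ((p choose Suc i) div p) * x ^ Suc i * y ^ (p - Suc i))"
      by (simp add: mult.assoc)
  qed
  finally show ?thesis by (simp add: algebra_simps)
qed

definition pcong :: "nat \<Rightarrow> complex poly \<Rightarrow> complex poly \<Rightarrow> bool" where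
  "pcong p A B \<longleftrightarrow> (\<exists>H. coeffs_in \<int> H \<and> A = B + smult (of_nat p) H)"

abbreviation Zp :: "complex poly \<Rightarrow> bool" where "Zp \<equiv> coeffs_in \<int>"

lemmas Z_add = ci_add[OF subring_Ints] and Z_mult = ci_mult[OF subring_Ints]
  and Z_diff = ci_diff[OF subring_Ints] and Z_uminus = ci_uminus[OF subring_Ints]
  and Z_smult = ci_smult[OF subring_Ints] and Z_power = ci_power[OF subring_Ints]
  and Z_const = ci_const[OF subring_Ints] and Z_monom = ci_monom[OF subring_Ints]
  and Z_pcompose = ci_pcompose[OF subring_Ints] and Z_0 = ci_0[OF subring_Ints]
  and Z_1 = ci_1[OF subring_Ints] and Z_sum = sr_sum[OF subring_Ints]

lemma Z_of_nat_smult: "Zp H \<Longrightarrow> Zp (smult (of_nat k) H)"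
  by (rule Z_smult) simp_all

lemma Z_sumP: "(\<And>i. i \<in> I \<Longrightarrow> Zp (f i)) \<Longrightarrow> Zp (sum f I)"
  by (induction I rule: infinite_finite_induct) (auto intro: Z_add Z_0)

lemma pcong_refl: "pcong p A A"
  unfolding pcong_def by (intro exI[of _ 0]) (simp add: Z_0)

lemma pcong_sym: "pcong p A B \<Longrightarrow> pcong p B A"
proof -
  assume "pcong p A B"
  then obtain H where H: "Zp H" "A = B + smult (of_nat p) H" unfolding pcong_def by blast
  then have "B = A + smult (of_nat p) (- H)" by simp
  then show ?thesis unfolding pcong_def using Z_uminus[OF H(1)] by blast
qed

lemma pcong_trans: "pcong p A B \<Longrightarrow> pcong p B C \<Longrightarrow> pcong p A C"
proof -
  assume "pcong p A B" "pcong p B C"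
  then obtain H K where H: "Zp H" "A = B + smult (of_nat p) H" and K: "Zp K" "B = C + smult (of_nat p) K"
    unfolding pcong_def by blast
  then have "A = C + smult (of_nat p) (K + H)" by (simp add: smult_add_right)
  then show ?thesis unfolding pcong_def using Z_add[OF K(1) H(1)] by blast
qed

lemma pcong_add: "pcong p A B \<Longrightarrow> pcong p C D \<Longrightarrow> pcong p (A + C) (B + D)"
proof -
  assume "pcong p A B" "pcong p C D"
  then obtain H K where H: "Zp H" "A = B + smult (of_nat p) H" and K: "Zp K" "C = D + smult (of_nat p) K"
    unfolding pcong_def by blast
  then have "A + C = B + D + smult (of_nat p) (H + K)" by (simp add: smult_add_right)
  then show ?thesis unfolding pcong_def using Z_add[OF H(1) K(1)] by blast
qed

lemma pcong_mult:
  assumes "Zp B" "Zp D" "pcong p A B" "pcong p C D"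
  shows "pcong p (A * C) (B * D)"
proof -
  obtain H K where H: "Zp H" "A = B + smult (of_nat p) H" and K: "Zp K" "C = D + smult (of_nat p) K"
    using assms unfolding pcong_def by blast
  have "A * C = B * D + smult (of_nat p) (H * D + B * K + smult (of_nat p) (H * K))"
    unfolding H K by (simp add: algebra_simps smult_add_right)
  moreover have "Zp (H * D + B * K + smult (of_nat p) (H * K))"
    using H K assms by (intro Z_add Z_mult Z_of_nat_smult)
  ultimately show ?thesis unfolding pcong_def by blast
qed

lemma pcong_power:
  assumes "Zp B" "pcong p A B" shows "pcong p (A ^ m) (B ^ m)"
  by (induction m) (use assms in \<open>auto intro: pcong_refl pcong_mult Z_power\<close>)

lemma pcong_binom:
  assumes p: "prime p" and u: "Zp u" and v: "Zp v"
  shows "pcong p ((u + v) ^ p) (u ^ p + v ^ p)"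
proof -
  define S where "S = (\<Sum>k<p-1. of_nat ((p choose Suc k) div p) * u ^ Suc k * v ^ (p - Suc k))"
  have eq: "(u + v) ^ p = u ^ p + v ^ p + of_nat p * S" unfolding S_def by (rule binom_p[OF p])
  have "Zp S" unfolding S_def
    by (intro Z_sumP Z_mult Z_power u v) (simp add: of_nat_poly Z_const)
  moreover have "(of_nat p :: complex poly) * S = smult (of_nat p) S" by (simp add: of_nat_poly)
  ultimately show ?thesis unfolding pcong_def eq by auto
qed

lemma fermat_nat: "prime p \<Longrightarrow> (a::nat) ^ p mod p = a mod p"
proof (induction a)
  case 0 then show ?case using prime_gt_0_nat[OF 0] by (simp add: power_0_left)
next
  case (Suc a)
  have "(a + 1) ^ p = a ^ p + 1 ^ p +
           p * (\<Sum>k<p-1. ((p choose Suc k) div p) * a ^ Suc k * 1 ^ (p - Suc k))"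
    using binom_p[OF Suc.prems, of a 1] by simp
  then have "Suc a ^ p mod p = (a ^ p + 1) mod p" by simp
  also have "\<dots> = (a ^ p mod p + 1) mod p" by (rule mod_add_left_eq[symmetric])
  also have "\<dots> = (a mod p + 1) mod p" using Suc.IH Suc.prems by simp
  also have "\<dots> = Suc a mod p" by (metis mod_add_left_eq Suc_eq_plus1)
  finally show ?case .
qed

lemma fermat_int: assumes p: "prime p" shows "(a::int) ^ p mod int p = a mod int p"
proof -
  define b where "b = nat (a mod int p)"
  have pb: "int p > 0" using prime_gt_0_nat[OF p] by simp
  have b: "int b = a mod int p" unfolding b_def using pb by simp
  have "a ^ p mod int p = (a mod int p) ^ p mod int p" by (simp add: power_mod)
  also have "\<dots> = int (b ^ p mod p)" unfolding b[symmetric] by (simp add: zmod_int)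
  also have "\<dots> = int (b mod p)" using fermat_nat[OF p] by simp
  also have "\<dots> = a mod int p" using b by (simp add: zmod_int)
  finally show ?thesis .
qed

lemma pcong_const_pow:
  assumes p: "prime p" and a: "a \<in> \<int>"
  shows "pcong p ([:a:] ^ p) [:a:]"
proof -
  obtain a' where a': "a = of_int a'" using a by (elim Ints_cases)
  have "int p dvd (a' ^ p - a')" using fermat_int[OF p, of a'] by (simp add: mod_eq_dvd_iff)
  then obtain k where k: "a' ^ p - a' = int p * k" by (elim dvdE)
  have "a ^ p = a + of_nat p * of_int k"
    using arg_cong[OF k, of "of_int :: int \<Rightarrow> complex"] a' by (simp add: algebra_simps)
  then have "[:a:] ^ p = [:a:] + smult (of_nat p) [:of_int k:]" by (simp add: poly_const_pow)
  then show ?thesis unfolding pcong_def by (intro exI[of _ "[:of_int k:]"]) (simp add: Z_const)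
qed

lemma frobenius:
  assumes p: "prime p" and f: "Zp f"
  shows "pcong p (f \<circ>\<^sub>p monom 1 p) (f ^ p)"
  using f
proof (induction f)
  case 0
  then show ?case using p by (simp add: pcong_refl prime_gt_0_nat power_0_left)
next
  case (pCons a f)
  have a: "a \<in> \<int>" and f: "Zp f" using pCons.prems by (simp_all add: ci_pCons_iff[OF subring_Ints])
  have IH: "pcong p (f \<circ>\<^sub>p monom 1 p) (f ^ p)" using pCons.IH f by blast
  have X: "monom (1::complex) p = [:0, 1:] ^ p" by (simp add: monom_altdef)
  have e1: "pCons a f \<circ>\<^sub>p monom 1 p = [:a:] + [:0, 1:] ^ p * (f \<circ>\<^sub>p monom 1 p)"
    by (simp add: pcompose_pCons X)
  have e2: "pCons a f = [:a:] + [:0, 1:] * f" by simp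
  have Zx: "Zp [:0, 1:]" by (simp add: ci_pCons_iff[OF subring_Ints] Z_0)
  have "pcong p ((pCons a f) ^ p) ([:a:] ^ p + ([:0, 1:] * f) ^ p)"
    unfolding e2 by (rule pcong_binom[OF p]) (use a f Zx in \<open>auto intro: Z_const Z_mult ci_pCons[OF subring_Ints]\<close>)
  moreover have "pcong p ([:a:] ^ p + ([:0, 1:] * f) ^ p) ([:a:] + [:0, 1:] ^ p * (f \<circ>\<^sub>p monom 1 p))"
  proof (rule pcong_add)
    show "pcong p ([:a:] ^ p) [:a:]" by (rule pcong_const_pow[OF p a])
    have "pcong p ([:0, 1:] ^ p * f ^ p) ([:0, 1:] ^ p * (f \<circ>\<^sub>p monom 1 p))"
      by (rule pcong_mult) (use Zx f IH Z_pcompose[OF f Z_monom[of 1]] in \<open>auto intro: Z_power pcong_refl pcong_sym\<close>)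
    then show "pcong p (([:0, 1:] * f) ^ p) ([:0, 1:] ^ p * (f \<circ>\<^sub>p monom 1 p))"
      by (simp only: power_mult_distrib)
  qed
  ultimately have "pcong p ((pCons a f) ^ p) (pCons a f \<circ>\<^sub>p monom 1 p)"
    unfolding e1 by (rule pcong_trans)
  then show ?case by (rule pcong_sym)
qed



definition pZ :: "nat \<Rightarrow> complex poly \<Rightarrow> bool" where
  "pZ p X \<longleftrightarrow> (\<forall>i. \<exists>k::int. coeff X i = of_nat p * of_int k)"

lemma pcong0_iff:
  assumes p: "p > 0" shows "pcong p X 0 \<longleftrightarrow> pZ p X"
proof
  assume "pcong p X 0"
  then obtain H where H: "Zp H" "X = smult (of_nat p) H" unfolding pcong_def by auto
  show "pZ p X" unfolding pZ_def
  proof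
    fix i
    have "coeff H i \<in> \<int>" using H unfolding coeffs_in_def by auto
    then obtain k where "coeff H i = of_int k" by (elim Ints_cases)
    then show "\<exists>k. coeff X i = of_nat p * of_int k" using H by auto
  qed
next
  assume X: "pZ p X"
  define H where "H = smult (1 / of_nat p) X"
  have "Zp H" unfolding coeffs_in_def H_def
  proof
    fix i
    obtain k where "coeff X i = of_nat p * of_int k" using X unfolding pZ_def by blast
    then show "coeff (smult (1 / of_nat p) X) i \<in> \<int>" using p by simp
  qed
  moreover have "X = 0 + smult (of_nat p) H" unfolding H_def using p by simp
  ultimately show "pcong p X 0" unfolding pcong_def by blast
qed

lemma pcong_iff_diff: "pcong p A B \<longleftrightarrow> pcong p (A - B) 0"
  unfolding pcong_def by (auto simp: algebra_simps)

lemma pZ_add: "pZ p A \<Longrightarrow> pZ p B \<Longrightarrow> pZ p (A + B)"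
  unfolding pZ_def by (metis coeff_add distrib_left of_int_add)

lemma pZ_diff: "pZ p A \<Longrightarrow> pZ p B \<Longrightarrow> pZ p (A - B)"
  unfolding pZ_def by (metis coeff_diff right_diff_distrib of_int_diff)

lemma pZ_sum: "(\<And>i. i \<in> I \<Longrightarrow> \<exists>k::int. f i = of_nat p * of_int k) \<Longrightarrow> \<exists>k::int. sum f I = of_nat p * of_int k"
proof (induction I rule: infinite_finite_induct)
  case (insert x F)
  then obtain a b where "f x = of_nat p * of_int a" "sum f F = of_nat p * of_int b" by force
  then have "sum f (insert x F) = of_nat p * of_int (a + b)" using insert by (simp add: distrib_left)
  then show ?case by blast
qed (auto intro: exI[of _ 0])

lemma pZ_mult: assumes "pZ p A" "Zp B" shows "pZ p (A * B)"
  unfolding pZ_def coeff_mult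
proof (intro allI pZ_sum)
  fix n i
  obtain a where a: "coeff A i = of_nat p * of_int a" using assms unfolding pZ_def by blast
  have "coeff B (n - i) \<in> \<int>" using assms unfolding coeffs_in_def by auto
  then obtain b where b: "coeff B (n - i) = of_int b" by (elim Ints_cases)
  show "\<exists>k::int. coeff A i * coeff B (n - i) = of_nat p * of_int k"
    using a b by (intro exI[of _ "a * b"]) simp
qed

lemma cancel_p:
  assumes p: "p > 0" and f: "lead_coeff f = 1" "Zp f" and g: "Zp g" and fg: "pZ p (f * g)"
  shows "pZ p g"
proof -
  have "\<forall>g. Zp g \<longrightarrow> pZ p (f * g) \<longrightarrow> (g \<noteq> 0 \<longrightarrow> degree g < n) \<longrightarrow> pZ p g" for n
  proof (induction n)
    case 0 then show ?case by (auto simp: pZ_def intro: exI[of _ 0])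
  next
    case (Suc n)
    show ?case
    proof (intro allI impI)
      fix g assume g: "Zp g" and fg: "pZ p (f * g)" and gd: "g \<noteq> 0 \<longrightarrow> degree g < Suc n"
      show "pZ p g"
      proof (cases "g = 0")
        case True then show ?thesis by (auto simp: pZ_def intro: exI[of _ 0])
      next
        case False
        define c where "c = lead_coeff g"
        define d where "d = degree g"
        define g' where "g' = g - monom c d"
        have "coeff (f * g) (degree f + degree g) = c" using f unfolding c_def by (simp add: coeff_mult_degree_sum)
        then obtain k where k: "c = of_nat p * of_int k" using fg unfolding pZ_def by metis
        have cZ: "c \<in> \<int>" using g unfolding c_def coeffs_in_def by auto
        have pm: "pZ p (monom c d)" unfolding pZ_def using k
          by (auto simp: coeff_monom intro: exI[of _ 0])
        have g'Z: "Zp g'" unfolding g'_def by (intro Z_diff g Z_monom cZ)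
        have "f * g' = f * g - monom c d * f" unfolding g'_def by (simp add: algebra_simps)
        then have fg': "pZ p (f * g')" using pZ_diff[OF fg pZ_mult[OF pm f(2)]] by simp
        have "coeff g' (degree g) = 0" unfolding g'_def c_def d_def by simp
        moreover have "degree g' \<le> degree g" unfolding g'_def d_def
          by (intro degree_diff_le) (simp_all add: degree_monom_le)
        ultimately have "g' = 0 \<or> degree g' < degree g"
          by (metis le_neq_implies_less leading_coeff_0_iff)
        then have "g' \<noteq> 0 \<longrightarrow> degree g' < n" using gd False by auto
        then have "pZ p g'" using Suc.IH g'Z fg' by blast
        moreover have "g = g' + monom c d" unfolding g'_def by simp
        ultimately show ?thesis using pZ_add[OF _ pm] by simp
      qed
    qed
  qed
  then show ?thesis using g fg by blast
qed

lemma cancel_pcong: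
  assumes p: "p > 0" and f: "lead_coeff f = 1" "Zp f" and g: "Zp g" and fg: "pcong p (f * g) 0"
  shows "pcong p g 0"
  using cancel_p[OF p f g] fg pcong0_iff[OF p] by blast

lemma cyclo_cong:
  assumes n: "n \<ge> 1" and p: "prime p" and k: "k \<ge> 1"
  shows "\<exists>e. e \<ge> p - 1 \<and> e \<ge> 1 \<and> pcong p (Phi (n * p ^ k)) (Phi n ^ e)"
  using k
proof (induction k rule: dec_induct)
  case base
  have p0: "p > 0" using prime_gt_0_nat[OF p] by simp
  have p1: "p > 1" using prime_gt_1_nat[OF p] by simp
  have np: "n * p \<ge> 1" using n p0 by (simp add: one_le_mult_iff)
  have Zn: "Zp (Phi n)" using cyclo_int n by simp
  show ?case
  proof (cases "p dvd n")
    case True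
    have "pcong p (Phi (n * p)) (Phi n ^ p)"
      using frobenius[OF p Zn] cyclo_comp_dvd[OF p True n] by simp
    then show ?thesis using p1 by (intro exI[of _ p]) simp
  next
    case False
    have "pcong p (Phi n * Phi (n * p)) (Phi n ^ p)"
      using frobenius[OF p Zn] cyclo_comp_ndvd[OF p False n] by simp
    moreover have "Phi n ^ p = Phi n * Phi n ^ (p - 1)" using p1 by (cases p) simp_all
    ultimately have "pcong p (Phi n * (Phi (n * p) - Phi n ^ (p - 1))) 0"
      using pcong_iff_diff by (simp add: right_diff_distrib)
    then have "pcong p (Phi (n * p) - Phi n ^ (p - 1)) 0"
      by (rule cancel_pcong[OF p0 cyclo_monic[OF n] Zn, rotated])
         (intro Z_diff Z_power Zn cyclo_int np)
    then have "pcong p (Phi (n * p)) (Phi n ^ (p - 1))" using pcong_iff_diff by blast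
    then show ?thesis using p1 by (intro exI[of _ "p - 1"]) simp
  qed
next
  case (step k)
  then obtain e where e: "e \<ge> p - 1" "e \<ge> 1" "pcong p (Phi (n * p ^ k)) (Phi n ^ e)" by blast
  have p0: "p > 0" using prime_gt_0_nat[OF p] by simp
  have nk: "n * p ^ k \<ge> 1" using n p0 by (simp add: one_le_mult_iff)
  have dv: "p dvd n * p ^ k" using step by (simp add: dvd_power)
  have "Phi (n * p ^ Suc k) = Phi (n * p ^ k) \<circ>\<^sub>p monom 1 p"
  proof -
    have e: "n * p ^ Suc k = n * p ^ k * p" by simp
    show ?thesis unfolding e using cyclo_comp_dvd[OF p dv nk] by (rule sym)
  qed
  moreover have "pcong p (Phi (n * p ^ k) \<circ>\<^sub>p monom 1 p) (Phi (n * p ^ k) ^ p)"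
    by (rule frobenius[OF p cyclo_int[OF nk]])
  moreover have "pcong p (Phi (n * p ^ k) ^ p) ((Phi n ^ e) ^ p)"
    by (rule pcong_power[OF _ e(3)]) (intro Z_power cyclo_int n)
  moreover have "(Phi n ^ e) ^ p = Phi n ^ (e * p)" by (simp add: power_mult)
  ultimately have "pcong p (Phi (n * p ^ Suc k)) (Phi n ^ (e * p))"
    using pcong_trans by metis
  moreover have "e \<le> e * p" using p0 by simp
  then have "e * p \<ge> p - 1" "e * p \<ge> 1" using e by linarith+
  ultimately show ?case by blast
qed



lemma prod_ideal:
  assumes fin: "finite K" and B: "Zp B"
    and A: "\<forall>k\<in>K. \<exists>C H. Zp C \<and> Zp H \<and> A k = B * C + smult (of_nat p) H"
  shows "\<forall>a b. a + b \<le> card K + 1 \<longrightarrow>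
           (\<exists>u v. Zp u \<and> Zp v \<and> (\<Prod>k\<in>K. A k) = B ^ a * u + smult (of_nat p ^ b) v)"
  using fin A
proof (induction K rule: finite_induct)
  case empty
  show ?case
  proof (intro allI impI)
    fix a b :: nat assume ab: "a + b \<le> card {} + 1"
    show "\<exists>u v. Zp u \<and> Zp v \<and> (\<Prod>k\<in>{}. A k) = B ^ a * u + smult (of_nat p ^ b) v"
    proof (cases "a = 0")
      case True then show ?thesis by (intro exI[of _ 1] exI[of _ 0]) (simp add: Z_0 Z_1)
    next
      case False then have "b = 0" using ab by simp
      then show ?thesis by (intro exI[of _ 0] exI[of _ 1]) (simp add: Z_0 Z_1)
    qed
  qed
next
  case (insert x K)
  have IH: "\<forall>a b. a + b \<le> card K + 1 \<longrightarrow>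
           (\<exists>u v. Zp u \<and> Zp v \<and> (\<Prod>k\<in>K. A k) = B ^ a * u + smult (of_nat p ^ b) v)"
    using insert by blast
  obtain C H where CH: "Zp C" "Zp H" "A x = B * C + smult (of_nat p) H" using insert.prems by blast
  have ZP: "Zp (\<Prod>k\<in>K. A k)"
  proof (rule ci_prod[OF subring_Ints])
    fix k assume "k \<in> K"
    then obtain C' H' where "Zp C'" "Zp H'" "A k = B * C' + smult (of_nat p) H'" using insert.prems by blast
    then show "Zp (A k)" using B by (simp add: Z_add Z_mult Z_of_nat_smult)
  qed
  have ZA: "Zp (A x)" using CH B by (simp add: Z_add Z_mult Z_of_nat_smult)
  have eqP: "(\<Prod>k\<in>insert x K. A k) = A x * (\<Prod>k\<in>K. A k)" using insert.hyps by simp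
  show ?case
  proof (intro allI impI)
    fix a b :: nat assume ab: "a + b \<le> card (insert x K) + 1"
    show "\<exists>u v. Zp u \<and> Zp v \<and> (\<Prod>k\<in>insert x K. A k) = B ^ a * u + smult (of_nat p ^ b) v"
    proof (cases "a = 0 \<or> b = 0")
      case True
      then show ?thesis
      proof
        assume "a = 0" then show ?thesis using ZP ZA eqP
          by (intro exI[of _ "A x * (\<Prod>k\<in>K. A k)"] exI[of _ 0]) (simp add: Z_0 Z_mult)
      next
        assume "b = 0" then show ?thesis using ZP ZA eqP
          by (intro exI[of _ 0] exI[of _ "A x * (\<Prod>k\<in>K. A k)"]) (simp add: Z_0 Z_mult)
      qed
    next
      case False
      then obtain a' b' where a': "a = Suc a'" and b': "b = Suc b'" by (metis not0_implies_Suc)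
      have c: "card (insert x K) = Suc (card K)" using insert.hyps by simp
      have ab1: "a' + b \<le> card K + 1" using ab a' c by simp
      obtain u1 v1 where 1: "Zp u1" "Zp v1" "(\<Prod>k\<in>K. A k) = B ^ a' * u1 + smult (of_nat p ^ b) v1"
        using IH ab1 by blast
      have ab2: "a + b' \<le> card K + 1" using ab b' c by simp
      obtain u2 v2 where 2: "Zp u2" "Zp v2" "(\<Prod>k\<in>K. A k) = B ^ a * u2 + smult (of_nat p ^ b') v2"
        using IH ab2 by blast
      have "(\<Prod>k\<in>insert x K. A k) = B * C * (\<Prod>k\<in>K. A k) + smult (of_nat p) H * (\<Prod>k\<in>K. A k)"
        unfolding eqP CH(3) by (simp only: distrib_right)
      also have "\<dots> = (B * C) * (B ^ a' * u1 + smult (of_nat p ^ b) v1)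
             + smult (of_nat p) H * (B ^ a * u2 + smult (of_nat p ^ b') v2)"
        using 1(3) 2(3) by (rule arg_cong2[where f="\<lambda>x y. B * C * x + smult (of_nat p) H * y"])
      also have "\<dots> = B ^ a * (C * u1 + smult (of_nat p) (H * u2))
             + smult (of_nat p ^ b) (B * C * v1 + H * v2)"
        unfolding a' b' by (simp add: algebra_simps smult_add_right)
      finally show ?thesis using 1 2 CH B
        by (intro exI[of _ "C * u1 + smult (of_nat p) (H * u2)"] exI[of _ "B * C * v1 + H * v2"])
           (simp add: Z_add Z_mult Z_of_nat_smult)
    qed
  qed
qed

context fixes R assumes R: "subring_C R" begin

lemma sep_dvd:
  assumes sep: "p_adically_separated R p" and B: "lead_coeff B = 1" "Zp B" and g: "coeffs_in R g"
    and rep: "\<forall>j. \<exists>w h. coeffs_in R w \<and> g = B * h + smult (of_nat p ^ j) w"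
  shows "B dvd g"
proof -
  have BR: "coeffs_in R B" using ci_Ints[OF R B(2)] .
  have B0: "B \<noteq> 0" using B by auto
  have "coeff (g mod B) i = 0" for i
  proof -
    have "coeff (g mod B) i \<in> (\<Inter>j. {of_nat p ^ j * r | r. r \<in> R})"
    proof (rule INT_I)
      fix j :: nat
      obtain w h where wh: "coeffs_in R w" "g = B * h + smult (of_nat p ^ j) w" using rep by blast
      have "g mod B = smult (of_nat p ^ j) w mod B"
        unfolding wh(2) by (metis add.commute mod_mult_self1 mult.commute)
      also have "\<dots> = smult (of_nat p ^ j) (w mod B)" by (rule mod_smult_left)
      finally have "coeff (g mod B) i = of_nat p ^ j * coeff (w mod B) i" by simp
      moreover have "coeff (w mod B) i \<in> R"
        using coeffs_in_div_mod[OF R B(1) BR wh(1)] unfolding coeffs_in_def by blast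
      ultimately show "coeff (g mod B) i \<in> {of_nat p ^ j * r | r. r \<in> R}" by blast
    qed
    then show ?thesis using sep unfolding p_adically_separated_def by auto
  qed
  then have "g mod B = 0" by (simp add: poly_eq_iff)
  then show ?thesis by (simp add: dvd_eq_mod_eq_0)
qed

lemma nz_const:
  assumes c: "c \<in> R" "c \<noteq> 0" and a: "Zp a" "a \<noteq> 0" "poly a c = 0"
  shows "\<exists>a0::int. a0 \<noteq> 0 \<and> (\<exists>t\<in>R. of_int a0 = c * t)"
  using a
proof (induction a rule: pCons_induct)
  case 0 then show ?case by simp
next
  case (pCons a0 a')
  have a0: "a0 \<in> \<int>" and a': "Zp a'" using pCons.prems by (simp_all add: ci_pCons_iff[OF subring_Ints])
  have eq: "a0 + c * poly a' c = 0" using pCons.prems by simp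
  show ?case
  proof (cases "a0 = 0")
    case False
    obtain b where b: "a0 = of_int b" using a0 by (elim Ints_cases)
    have "poly a' c \<in> R" using poly_in[OF R ci_Ints[OF R a'] c(1)] .
    then have "- poly a' c \<in> R" using sr_uminus[OF R] by blast
    moreover have "of_int b = c * (- poly a' c)" using eq b by (simp add: algebra_simps eq_neg_iff_add_eq_0)
    ultimately have "\<exists>t\<in>R. of_int b = c * t" by blast
    moreover have "b \<noteq> 0" using False b by auto
    ultimately show ?thesis by blast
  next
    case True
    then have "a' \<noteq> 0" using pCons.hyps by simp
    moreover have "poly a' c = 0" using eq True c by simp
    ultimately show ?thesis using pCons.IH a' by blast
  qed
qed

lemma alg_zero:
  assumes c: "c \<in> R" "algebraic c" and P: "infinite P" "\<forall>p\<in>P. prime p \<and> p_adically_separated R p"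
    and div: "\<forall>p\<in>P. \<exists>r\<in>R. c = of_nat p * r"
  shows "c = 0"
proof (rule ccontr)
  assume c0: "c \<noteq> 0"
  obtain a where a: "\<forall>i. coeff a i \<in> \<int>" "a \<noteq> 0" "poly a c = 0" using c(2) unfolding algebraic_def by blast
  have "Zp a" using a(1) unfolding coeffs_in_def by blast
  then obtain a0 t where a0: "a0 \<noteq> 0" "t \<in> R" "of_int a0 = c * t" using nz_const[OF c(1) c0] a by blast
  obtain p where p: "p > nat \<bar>a0\<bar>" "p \<in> P" using P(1) unfolding infinite_nat_iff_unbounded by blast
  have pp: "prime p" and sep: "p_adically_separated R p" using P(2) p(2) by auto
  obtain r where r: "r \<in> R" "c = of_nat p * r" using div p(2) by blast
  have "\<not> int p dvd a0" using p(1) a0(1) dvd_imp_le_int[of a0 "int p"] by auto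
  then have "coprime (int p) a0" using pp by (simp add: prime_imp_coprime prime_nat_iff_prime)
  then obtain u v where uv: "u * int p + v * a0 = 1" using bezout_int[of "int p" a0] by auto
  define s where "s = of_int u + of_int v * r * t"
  have sR: "s \<in> R" unfolding s_def using r a0
    by (intro sr_add[OF R] sr_mult[OF R] sr_of_int[OF R]) auto
  have "(1::complex) = of_int (u * int p + v * a0)" using uv by simp
  also have "\<dots> = of_nat p * s" unfolding s_def using a0(3) r(2) by (simp add: algebra_simps)
  finally have one: "1 = of_nat p * s" .
  have "(1::complex) \<in> (\<Inter>j. {of_nat p ^ j * r | r. r \<in> R})"
  proof (rule INT_I)
    fix j :: nat
    have "(1::complex) = (of_nat p * s) ^ j" using one by (metis power_one)
    then have "1 = of_nat p ^ j * s ^ j" by (simp add: power_mult_distrib)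
    then show "1 \<in> {of_nat p ^ j * r | r. r \<in> R}" using sr_power[OF R sR] by blast
  qed
  then show False using sep unfolding p_adically_separated_def by auto
qed

lemma sep2_dvd:
  assumes alg: "\<forall>x\<in>R. algebraic x" and P: "infinite P" "\<forall>p\<in>P. prime p \<and> p_adically_separated R p"
    and B: "lead_coeff B = 1" "Zp B" and g: "coeffs_in R g"
    and rep: "\<forall>p\<in>P. \<exists>w h. coeffs_in R w \<and> g = B * h + smult (of_nat p) w"
  shows "B dvd g"
proof -
  have BR: "coeffs_in R B" using ci_Ints[OF R B(2)] .
  have "coeff (g mod B) i = 0" for i
  proof (rule alg_zero)
    show cR: "coeff (g mod B) i \<in> R" using coeffs_in_div_mod[OF R B(1) BR g] unfolding coeffs_in_def by blast
    show "algebraic (coeff (g mod B) i)" using alg cR by blast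
    show "infinite P" "\<forall>p\<in>P. prime p \<and> p_adically_separated R p" using P by auto
    show "\<forall>p\<in>P. \<exists>r\<in>R. coeff (g mod B) i = of_nat p * r"
    proof
      fix p assume "p \<in> P"
      then obtain w h where wh: "coeffs_in R w" "g = B * h + smult (of_nat p) w" using rep by blast
      have "g mod B = smult (of_nat p) w mod B"
        unfolding wh(2) by (metis add.commute mod_mult_self1 mult.commute)
      also have "\<dots> = smult (of_nat p) (w mod B)" by (rule mod_smult_left)
      finally have "coeff (g mod B) i = of_nat p * coeff (w mod B) i" by simp
      moreover have "coeff (w mod B) i \<in> R"
        using coeffs_in_div_mod[OF R B(1) BR wh(1)] unfolding coeffs_in_def by blast
      ultimately show "\<exists>r\<in>R. coeff (g mod B) i = of_nat p * r" by blast
    qed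
  qed
  then have "g mod B = 0" by (simp add: poly_eq_iff)
  then show ?thesis by (simp add: dvd_eq_mod_eq_0)
qed

end


lemma ps_monic_Z:
  assumes "f \<in> Phi_star S" "0 \<notin> S"
  shows "lead_coeff f = 1 \<and> Zp f"
proof -
  obtain M where M: "f = prod_mset (image_mset Phi M)" "set_mset M \<subseteq> S"
    using assms(1) unfolding Phi_star_def by blast
  have "set_mset M \<subseteq> S \<Longrightarrow> lead_coeff (prod_mset (image_mset Phi M)) = 1 \<and> Zp (prod_mset (image_mset Phi M))"
  proof (induction M)
    case empty then show ?case by (simp add: Z_1)
  next
    case (add x M)
    have x: "x \<ge> 1" using add.prems assms(2) by (cases x) auto
    show ?case using add cyclo_monic[OF x] cyclo_int[OF x] by (simp add: lead_coeff_mult Z_mult)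
  qed
  then show ?thesis using M by simp
qed

lemma ps_one: "1 \<in> Phi_star S"
  unfolding Phi_star_def by (intro CollectI exI[of _ "{#}"]) simp

lemma ps_mult: "f \<in> Phi_star S \<Longrightarrow> g \<in> Phi_star S \<Longrightarrow> f * g \<in> Phi_star S"
  unfolding Phi_star_def
proof safe
  fix M N assume "set_mset M \<subseteq> S" "set_mset N \<subseteq> S"
  then show "\<exists>K. prod_mset (image_mset Phi M) * prod_mset (image_mset Phi N) = prod_mset (image_mset Phi K)
         \<and> set_mset K \<subseteq> S"
    by (intro exI[of _ "M + N"]) auto
qed

lemma ps_Phi: "s \<in> S \<Longrightarrow> Phi s \<in> Phi_star S"
  unfolding Phi_star_def by (intro CollectI exI[of _ "{#s#}"]) simp

lemma ps_pow: "s \<in> S \<Longrightarrow> Phi s ^ N \<in> Phi_star S"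
  by (induction N) (auto intro: ps_mult ps_Phi ps_one)

lemma ps_prod: "finite K \<Longrightarrow> (\<And>k. k \<in> K \<Longrightarrow> h k \<in> S) \<Longrightarrow> (\<Prod>k\<in>K. Phi (h k)) \<in> Phi_star S"
  by (induction K rule: finite_induct) (auto intro: ps_mult ps_Phi ps_one)

lemma cyclo_prod_dvd:
  fixes g :: "complex poly"
  assumes "finite K" "inj_on h K" "\<forall>k\<in>K. h k \<ge> 1" "\<forall>k\<in>K. Phi (h k) dvd g"
  shows "(\<Prod>k\<in>K. Phi (h k)) dvd g"
proof -
  have "(\<Prod>s\<in>h ` K. Phi s ^ (\<lambda>_. 1::nat) s) dvd g"
    by (rule cyclo_pow_prod_dvd) (use assms in auto)
  then show ?thesis using prod.reindex[OF assms(2), of Phi] by simp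
qed

context fixes R S z
  assumes R: "subring_C R" and S0: "0 \<notin> S" and z: "completion_elem R S z"
begin

lemma zR: "f \<in> Phi_star S \<Longrightarrow> coeffs_in R (z f)"
  using z unfolding completion_elem_def by blast

lemma compat:
  assumes f: "f \<in> Phi_star S" and fG: "f * G \<in> Phi_star S" and G: "Zp G"
  shows "f dvd (z (f * G) - z f)"
proof -
  have "dvd_in \<int> f (f * G)" unfolding dvd_in_def using G by blast
  then have "dvd_in R f (z (f * G) - z f)" using z f fG unfolding completion_elem_def by blast
  then show ?thesis unfolding dvd_in_def by (auto intro: dvdI)
qed

lemma extract_rep:
  assumes B: "B \<in> Phi_star S" and F: "F \<in> Phi_star S" and Fd: "F dvd z (B * F)"
    and u: "Zp u" and v: "Zp v" and eq: "F = B * u + smult c v"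
  shows "\<exists>w h. coeffs_in R w \<and> z B = B * h + smult c w"
proof -
  have BF: "B * F \<in> Phi_star S" using ps_mult[OF B F] .
  have Fm: "lead_coeff F = 1" "Zp F" using ps_monic_Z[OF F S0] by auto
  define g0 where "g0 = z (B * F) div F"
  have g0R: "coeffs_in R g0" unfolding g0_def
    using coeffs_in_div_mod[OF R Fm(1) ci_Ints[OF R Fm(2)] zR[OF BF]] by blast
  have zf: "z (B * F) = F * g0" unfolding g0_def using Fd by simp
  obtain h1 where h1: "z (B * F) - z B = B * h1" using compat[OF B BF Fm(2)] by (elim dvdE)
  have "z B = F * g0 - B * h1" using h1 zf by (simp add: algebra_simps)
  also have "\<dots> = B * (u * g0 - h1) + smult c (v * g0)" unfolding eq by (simp add: algebra_simps)
  finally show ?thesis using ci_mult[OF R ci_Ints[OF R v] g0R] by blast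
qed

definition KK :: "nat \<Rightarrow> bool" where "KK s \<longleftrightarrow> (\<forall>N. Phi s ^ N dvd z (Phi s ^ N))"

lemma fin:
  assumes all: "\<forall>s\<in>S. KK s" and f: "f \<in> Phi_star S"
  shows "f dvd z f"
proof -
  obtain M where M: "f = prod_mset (image_mset Phi M)" "set_mset M \<subseteq> S"
    using f unfolding Phi_star_def by blast
  have fe: "f = (\<Prod>s\<in>set_mset M. Phi s ^ count M s)" using M by (simp add: image_prod_mset_multiplicity)
  have pos: "\<forall>s\<in>set_mset M. s \<ge> 1" using M S0 by (metis less_one not_le subsetD)
  have "\<forall>s\<in>set_mset M. Phi s ^ count M s dvd z f"
  proof
    fix s assume s: "s \<in> set_mset M"
    define G where "G = (\<Prod>s'\<in>set_mset M - {s}. Phi s' ^ count M s')"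
    have fG: "f = Phi s ^ count M s * G" unfolding fe G_def using s by (simp add: prod.remove)
    have sS: "s \<in> S" using s M by auto
    have GZ: "Zp G" unfolding G_def
      by (intro ci_prod[OF subring_Ints] Z_power cyclo_int) (use pos in auto)
    have "Phi s ^ count M s dvd z f - z (Phi s ^ count M s)"
      using compat[OF ps_pow[OF sS] _ GZ] fG f by simp
    moreover have "Phi s ^ count M s dvd z (Phi s ^ count M s)" using all sS unfolding KK_def by blast
    ultimately show "Phi s ^ count M s dvd z f" by (metis dvd_add diff_add_cancel)
  qed
  then show ?thesis unfolding fe[symmetric]
    using cyclo_pow_prod_dvd[of "set_mset M" "\<lambda>s. count M s" "z f"] pos fe by simp
qed

lemma power_rep:
  assumes n: "n \<ge> 1" and n': "n' \<ge> 1" and p: "prime p" and k: "k \<ge> 1"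
    and rel: "n = n' * p ^ k \<or> n' = n * p ^ k"
  shows "\<exists>M u v. Zp u \<and> Zp v \<and> Phi n ^ M = Phi n' ^ N * u + smult (of_nat p ^ j) v"
  using rel
proof
  assume r: "n = n' * p ^ k"
  obtain e H where e: "e \<ge> 1" "Zp H" "Phi n = Phi n' ^ e + smult (of_nat p) H"
    using cyclo_cong[OF n' p k] r unfolding pcong_def by blast
  have A: "\<forall>i\<in>{..<N + j}. \<exists>C H. Zp C \<and> Zp H \<and> Phi n = Phi n' * C + smult (of_nat p) H"
    using e cyclo_int[OF n'] by (intro ballI exI[of _ "Phi n' ^ (e - 1)"] exI[of _ H])
      (simp add: Z_power power_Suc[symmetric])
  have PI: "\<forall>a b. a + b \<le> card {..<N + j} + 1 \<longrightarrow> (\<exists>u v. Zp u \<and> Zp v \<and>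
      (\<Prod>i\<in>{..<N + j}. Phi n) = Phi n' ^ a * u + smult (of_nat p ^ b) v)"
    by (rule prod_ideal[OF finite_lessThan cyclo_int[OF n'] A])
  obtain u v where uv: "Zp u" "Zp v" "(\<Prod>i\<in>{..<N + j}. Phi n) = Phi n' ^ N * u + smult (of_nat p ^ j) v"
    using PI[rule_format, of N j] by auto
  then show ?thesis by (intro exI[of _ "N + j"] exI[of _ u] exI[of _ v]) simp
next
  assume r: "n' = n * p ^ k"
  obtain e H where e: "e \<ge> 1" "Zp H" "Phi n' = Phi n ^ e + smult (of_nat p) H"
    using cyclo_cong[OF n p k] r unfolding pcong_def by blast
  have A: "\<forall>i\<in>{..<N + j}. \<exists>C H. Zp C \<and> Zp H \<and> Phi n ^ e = Phi n' * C + smult (of_nat p) H"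
    using e by (intro ballI exI[of _ 1] exI[of _ "- H"]) (simp add: Z_1 Z_uminus)
  have PI: "\<forall>a b. a + b \<le> card {..<N + j} + 1 \<longrightarrow> (\<exists>u v. Zp u \<and> Zp v \<and>
      (\<Prod>i\<in>{..<N + j}. Phi n ^ e) = Phi n' ^ a * u + smult (of_nat p ^ b) v)"
    by (rule prod_ideal[OF finite_lessThan cyclo_int[OF n'] A])
  obtain u v where uv: "Zp u" "Zp v" "(\<Prod>i\<in>{..<N + j}. Phi n ^ e) = Phi n' ^ N * u + smult (of_nat p ^ j) v"
    using PI[rule_format, of N j] by auto
  then show ?thesis by (intro exI[of _ "e * (N + j)"] exI[of _ u] exI[of _ v]) (simp add: power_mult)
qed

lemma propagate:
  assumes nS: "n \<in> S" and n'S: "n' \<in> S" and Kn: "KK n" and p: "prime p"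
    and sep: "p_adically_separated R p" and rel: "n = n' * p ^ k \<or> n' = n * p ^ k"
  shows "KK n'"
proof (cases "k = 0")
  case True then show ?thesis using rel Kn by auto
next
  case False
  have n: "n \<ge> 1" and n': "n' \<ge> 1" using nS n'S S0 by (metis less_one not_le)+
  show ?thesis unfolding KK_def
  proof
    fix N
    have B: "Phi n' ^ N \<in> Phi_star S" using ps_pow[OF n'S] .
    have Bm: "lead_coeff (Phi n' ^ N) = 1" "Zp (Phi n' ^ N)" using ps_monic_Z[OF B S0] by auto
    have "\<forall>j. \<exists>w h. coeffs_in R w \<and> z (Phi n' ^ N) = Phi n' ^ N * h + smult (of_nat p ^ j) w"
    proof
      fix j
      obtain M u v where uv: "Zp u" "Zp v" "Phi n ^ M = Phi n' ^ N * u + smult (of_nat p ^ j) v"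
        using power_rep[OF n n' p _ rel] False by fastforce
      have F: "Phi n ^ M \<in> Phi_star S" using ps_pow[OF nS] .
      have BF: "Phi n' ^ N * Phi n ^ M \<in> Phi_star S" using ps_mult[OF B F] .
      have "Phi n ^ M dvd z (Phi n ^ M * Phi n' ^ N) - z (Phi n ^ M)"
        using compat[OF F _ Bm(2)] BF by (simp add: mult.commute)
      moreover have "Phi n ^ M dvd z (Phi n ^ M)" using Kn unfolding KK_def by blast
      ultimately have "Phi n ^ M dvd z (Phi n' ^ N * Phi n ^ M)"
        by (metis dvd_add diff_add_cancel mult.commute)
      then show "\<exists>w h. coeffs_in R w \<and> z (Phi n' ^ N) = Phi n' ^ N * h + smult (of_nat p ^ j) w"
        using extract_rep[OF B F _ uv] by blast
    qed
    then show "Phi n' ^ N dvd z (Phi n' ^ N)"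
      using sep_dvd[OF R sep Bm zR[OF B]] by blast
  qed
qed

end



context fixes R S z
  assumes R: "subring_C R" and S0: "0 \<notin> S" and z: "completion_elem R S z"
begin

lemma init:
  assumes alg: "\<forall>x\<in>R. algebraic x" and R0: "R \<noteq> {0}" and TS: "T \<subseteq> S"
    and tau0: "\<forall>m\<in>T. Phi m dvd z (Phi m)"
    and nS: "n \<in> S" and inf: "infinite {m\<in>T. equiv_R R m n}"
  shows "\<forall>N. Phi n ^ N dvd z (Phi n ^ N)"
proof
  fix N
  have n: "n \<ge> 1" using nS S0 by (metis less_one not_le)
  define Kp where "Kp p = {k. k \<ge> 1 \<and> n * p ^ k \<in> T}" for p
  define Pr where "Pr = {p. prime p \<and> p_adically_separated R p \<and> Kp p \<noteq> {}}"
  define A' where "A' = {m\<in>T. equiv_R R m n} - {m. m dvd n}"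
  have fd: "finite {m. m dvd n}" using n by (intro finite_divisors_nat) simp
  have infA: "infinite A'" unfolding A'_def using inf fd by (rule Diff_infinite_finite[rotated])
  have A'sub: "A' \<subseteq> (\<Union>p\<in>Pr. (\<lambda>k. n * p ^ k) ` Kp p)"
  proof
    fix m assume m: "m \<in> A'"
    then have mT: "m \<in> T" and eq: "equiv_R R m n" and nd: "\<not> m dvd n" unfolding A'_def by auto
    have "m \<noteq> n" using nd by auto
    then obtain p k where pk: "prime p" "p_adically_separated R p" "m = n * p ^ k \<or> n = m * p ^ k"
      using eq R0 unfolding equiv_R_def by blast
    have mk: "m = n * p ^ k" using pk(3) nd by auto
    have "k \<noteq> 0" using mk \<open>m \<noteq> n\<close> by auto
    then have "k \<in> Kp p" unfolding Kp_def using mk mT by auto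
    then have "p \<in> Pr" unfolding Pr_def using pk by auto
    then show "m \<in> (\<Union>p\<in>Pr. (\<lambda>k. n * p ^ k) ` Kp p)" using \<open>k \<in> Kp p\<close> mk by blast
  qed
  have B: "Phi n ^ N \<in> Phi_star S" using ps_pow[OF nS] .
  have Bm: "lead_coeff (Phi n ^ N) = 1" "Zp (Phi n ^ N)" using ps_monic_Z[OF B S0] by auto
  have Zn: "Zp (Phi n)" using cyclo_int[OF n] .
  show "Phi n ^ N dvd z (Phi n ^ N)"
  proof (cases "finite Pr")
    case True
    have "\<exists>p\<in>Pr. infinite (Kp p)"
    proof (rule ccontr)
      assume "\<not> (\<exists>p\<in>Pr. infinite (Kp p))"
      then have "finite (\<Union>p\<in>Pr. (\<lambda>k. n * p ^ k) ` Kp p)" using True by auto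
      then show False using infA A'sub finite_subset by blast
    qed
    then obtain p where pPr: "p \<in> Pr" and infK: "infinite (Kp p)" by blast
    have p: "prime p" and sep: "p_adically_separated R p" using pPr unfolding Pr_def by auto
    have p1: "p > 1" using prime_gt_1_nat[OF p] .
    have "\<forall>j. \<exists>w h. coeffs_in R w \<and> z (Phi n ^ N) = Phi n ^ N * h + smult (of_nat p ^ j) w"
    proof
      fix j
      obtain K where K: "finite K" "card K = N + j" "K \<subseteq> Kp p"
        using infinite_arbitrarily_large[OF infK] by blast
      have Kk: "k \<ge> 1" "n * p ^ k \<in> T" if "k \<in> K" for k using K(3) that unfolding Kp_def by auto
      have Kpos: "n * p ^ k \<ge> 1" if "k \<in> K" for k using n p1 by (simp add: one_le_mult_iff)
      define F where "F = (\<Prod>k\<in>K. Phi (n * p ^ k))"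
      have F: "F \<in> Phi_star S" unfolding F_def using K(1) Kk TS by (intro ps_prod) auto
      have A: "\<forall>k\<in>K. \<exists>C H. Zp C \<and> Zp H \<and> Phi (n * p ^ k) = Phi n * C + smult (of_nat p) H"
      proof
        fix k assume k: "k \<in> K"
        obtain e H where e: "e \<ge> 1" "Zp H" "Phi (n * p ^ k) = Phi n ^ e + smult (of_nat p) H"
          using cyclo_cong[OF n p Kk(1)[OF k]] unfolding pcong_def by blast
        then show "\<exists>C H. Zp C \<and> Zp H \<and> Phi (n * p ^ k) = Phi n * C + smult (of_nat p) H"
          using Zn by (intro exI[of _ "Phi n ^ (e - 1)"] exI[of _ H]) (simp add: Z_power power_Suc[symmetric])
      qed
      have PI: "\<forall>a b. a + b \<le> card K + 1 \<longrightarrow> (\<exists>u v. Zp u \<and> Zp v \<and>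
          (\<Prod>k\<in>K. Phi (n * p ^ k)) = Phi n ^ a * u + smult (of_nat p ^ b) v)"
        by (rule prod_ideal[OF K(1) Zn A])
      obtain u v where uv: "Zp u" "Zp v" "F = Phi n ^ N * u + smult (of_nat p ^ j) v"
        using PI[rule_format, of N j] K(2) unfolding F_def by auto
      have BF: "Phi n ^ N * F \<in> Phi_star S" using ps_mult[OF B F] .
      have inj: "inj_on (\<lambda>k. n * p ^ k) K"
        using n p1 by (auto simp: inj_on_def power_inject_exp)
      have "\<forall>k\<in>K. Phi (n * p ^ k) dvd z (Phi n ^ N * F)"
      proof
        fix k assume k: "k \<in> K"
        define G where "G = Phi n ^ N * (\<Prod>k'\<in>K - {k}. Phi (n * p ^ k'))"
        have GZ: "Zp G" unfolding G_def
          by (intro Z_mult Bm(2) ci_prod[OF subring_Ints] cyclo_int) (use Kpos in auto)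
        have eqG: "Phi n ^ N * F = Phi (n * p ^ k) * G"
          unfolding G_def F_def using K(1) k by (simp add: prod.remove mult.left_commute)
        have kS: "n * p ^ k \<in> S" using Kk(2)[OF k] TS by auto
        have "Phi (n * p ^ k) dvd z (Phi n ^ N * F) - z (Phi (n * p ^ k))"
          using compat[OF R S0 z ps_Phi[OF kS] _ GZ] BF eqG by simp
        moreover have "Phi (n * p ^ k) dvd z (Phi (n * p ^ k))" using tau0 Kk(2)[OF k] by blast
        ultimately show "Phi (n * p ^ k) dvd z (Phi n ^ N * F)" by (metis dvd_add diff_add_cancel)
      qed
      then have Fd: "F dvd z (Phi n ^ N * F)" unfolding F_def
        using cyclo_prod_dvd[OF K(1) inj] Kpos by blast
      show "\<exists>w h. coeffs_in R w \<and> z (Phi n ^ N) = Phi n ^ N * h + smult (of_nat p ^ j) w"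
        using extract_rep[OF R S0 z B F Fd uv] .
    qed
    then show ?thesis using sep_dvd[OF R sep Bm zR[OF R S0 z B]] by blast
  next
    case False
    define P' where "P' = Pr - {..N}"
    have infP: "infinite P'" unfolding P'_def using False by (simp add: Diff_infinite_finite)
    have P'p: "\<forall>p\<in>P'. prime p \<and> p_adically_separated R p" unfolding P'_def Pr_def by auto
    have "\<forall>p\<in>P'. \<exists>w h. coeffs_in R w \<and> z (Phi n ^ N) = Phi n ^ N * h + smult (of_nat p) w"
    proof
      fix p assume pP: "p \<in> P'"
      then have p: "prime p" and pN: "p > N" and Kne: "Kp p \<noteq> {}" unfolding P'_def Pr_def by auto
      then obtain k where k: "k \<ge> 1" "n * p ^ k \<in> T" unfolding Kp_def by auto
      have kS: "n * p ^ k \<in> S" using k TS by auto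
      obtain e H where e: "e \<ge> p - 1" "Zp H" "Phi (n * p ^ k) = Phi n ^ e + smult (of_nat p) H"
        using cyclo_cong[OF n p k(1)] unfolding pcong_def by blast
      have eN: "e \<ge> N" using e(1) pN by simp
      have eq: "Phi (n * p ^ k) = Phi n ^ N * Phi n ^ (e - N) + smult (of_nat p) H"
        using e(3) eN by (simp add: power_add[symmetric])
      have F: "Phi (n * p ^ k) \<in> Phi_star S" using ps_Phi[OF kS] .
      have BF: "Phi n ^ N * Phi (n * p ^ k) \<in> Phi_star S" using ps_mult[OF B F] .
      have "Phi (n * p ^ k) dvd z (Phi (n * p ^ k) * Phi n ^ N) - z (Phi (n * p ^ k))"
        using compat[OF R S0 z F _ Bm(2)] BF by (simp add: mult.commute)
      moreover have "Phi (n * p ^ k) dvd z (Phi (n * p ^ k))" using tau0 k(2) by blast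
      ultimately have Fd: "Phi (n * p ^ k) dvd z (Phi n ^ N * Phi (n * p ^ k))"
        by (metis dvd_add diff_add_cancel mult.commute)
      show "\<exists>w h. coeffs_in R w \<and> z (Phi n ^ N) = Phi n ^ N * h + smult (of_nat p) w"
        using extract_rep[OF R S0 z B F Fd _ e(2) eq] Zn by (simp add: Z_power)
    qed
    then show ?thesis using sep2_dvd[OF R alg infP P'p Bm zR[OF R S0 z B]] by blast
  qed
qed

end



lemma algint_sep:
  assumes R: "subring_C R" and ai: "\<forall>x\<in>R. algebraic_int x" and p: "prime p"
  shows "p_adically_separated R p"
  unfolding p_adically_separated_def
proof (rule set_eqI, rule iffI)
  fix c assume c: "c \<in> (\<Inter>j. {of_nat p ^ j * r | r. r \<in> R})"
  have cj: "\<exists>r\<in>R. c = of_nat p ^ j * r" for j using c by blast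
  have cR: "c \<in> R" using cj[of 0] by auto
  show "c \<in> {0}"
  proof (rule ccontr)
    assume "c \<notin> {0}" then have c0: "c \<noteq> 0" by simp
    have "algebraic_int c" using ai cR by blast
    then obtain a where a: "lead_coeff a = 1" "\<forall>i. coeff a i \<in> \<int>" "poly a c = 0"
      unfolding algebraic_int.simps by blast
    have "Zp a" using a(2) unfolding coeffs_in_def by blast
    moreover have "a \<noteq> 0" using a(1) by auto
    ultimately obtain a0 t where a0: "a0 \<noteq> 0" "t \<in> R" "of_int a0 = c * t"
      using nz_const[OF R cR c0] a(3) by blast
    have dv: "int p ^ j dvd a0" for j
    proof -
      obtain r where r: "r \<in> R" "c = of_nat p ^ j * r" using cj by blast
      have p0: "(of_nat p :: complex) ^ j \<noteq> 0" using prime_gt_0_nat[OF p] by simp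
      have e: "of_int a0 = (of_nat p :: complex) ^ j * (r * t)" using a0(3) r(2) by (simp add: algebra_simps)
      have q: "of_int a0 / of_nat p ^ j = r * t" unfolding e using p0 by (rule nonzero_mult_div_cancel_left)
      have "r * t \<in> R" using sr_mult[OF R r(1) a0(2)] .
      then have "algebraic_int (r * t)" using ai by blast
      moreover have "of_int a0 / (of_nat p :: complex) ^ j \<in> \<rat>" by simp
      ultimately have "of_int a0 / (of_nat p :: complex) ^ j \<in> \<int>" using q rational_algebraic_int_is_int by metis
      then obtain m where m: "of_int a0 / (of_nat p :: complex) ^ j = of_int m" by (elim Ints_cases)
      then have "(of_int a0 :: complex) = of_int (int p ^ j * m)" using p0 by (simp add: field_simps)
      then have "a0 = int p ^ j * m" by (simp only: of_int_eq_iff)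
      then show ?thesis by simp
    qed
    define j where "j = nat \<bar>a0\<bar>"
    have "\<bar>int p ^ j\<bar> \<le> \<bar>a0\<bar>" using dvd_imp_le_int[OF a0(1) dv[of j]] .
    moreover have "int j < int (2 ^ j)" using less_exp[of j] by (simp only: of_nat_less_iff)
    then have "int j < 2 ^ j" by simp
    moreover have "(2::int) ^ j \<le> int p ^ j" using prime_ge_2_nat[OF p] by (intro power_mono) auto
    ultimately show False unfolding j_def by simp
  qed
next
  fix c assume "c \<in> {0::complex}"
  then show "c \<in> (\<Inter>j. {of_nat p ^ j * r | r. r \<in> R})" using sr_0[OF R] by force
qed

lemma conn_all:
  assumes sep: "\<forall>p. prime p \<longrightarrow> p_adically_separated R p"
  shows "equiv_R_connected R {n. n \<ge> 1}"
proof -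
  define rel where "rel = (\<lambda>u v. u \<in> {n::nat. n \<ge> 1} \<and> v \<in> {n. n \<ge> 1} \<and> equiv_R R u v)"
  have main: "a \<ge> 1 \<Longrightarrow> rel\<^sup>*\<^sup>* 1 a \<and> rel\<^sup>*\<^sup>* a 1" for a
  proof (induction a rule: less_induct)
    case (less a)
    show ?case
    proof (cases "a = 1")
      case True then show ?thesis by simp
    next
      case False
      obtain p where p: "prime p" "p dvd a" using prime_factor_nat[OF False] by blast
      then obtain b where b: "a = p * b" by (elim dvdE)
      have b1: "b \<ge> 1" using b less.prems by (cases b) auto
      have "b < a" using b b1 prime_gt_1_nat[OF p(1)] by simp
      then have IH: "rel\<^sup>*\<^sup>* 1 b \<and> rel\<^sup>*\<^sup>* b 1" using less.IH b1 by blast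
      have e1: "equiv_R R b a" unfolding equiv_R_def using p sep b
        by (intro disjI2 disjI1 exI[of _ p] exI[of _ 1]) (simp add: mult.commute)
      have e2: "equiv_R R a b" unfolding equiv_R_def using p sep b
        by (intro disjI2 disjI1 exI[of _ p] exI[of _ 1]) (simp add: mult.commute)
      have "rel b a" "rel a b" unfolding rel_def using e1 e2 b1 less.prems by auto
      then show ?thesis using IH
        by (meson rtranclp.rtrancl_into_rtrancl converse_rtranclp_into_rtranclp)
    qed
  qed
  show ?thesis unfolding equiv_R_connected_def
  proof (intro conjI ballI)
    show "{n::nat. n \<ge> 1} \<noteq> {}" by auto
  next
    fix a b assume "a \<in> {n::nat. n \<ge> 1}" "b \<in> {n::nat. n \<ge> 1}"
    then have "rel\<^sup>*\<^sup>* a 1" "rel\<^sup>*\<^sup>* 1 b" using main by auto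
    then show "(\<lambda>u v. u \<in> {n. 1 \<le> n} \<and> v \<in> {n. 1 \<le> n} \<and> equiv_R R u v)\<^sup>*\<^sup>* a b"
      unfolding rel_def by (rule rtranclp_trans)
  qed
qed

lemma part1:
  assumes R: "subring_C R" and alg: "\<forall>x\<in>R. algebraic x" and S0: "0 \<notin> S"
    and conn: "equiv_R_connected R S" and TS: "T \<subseteq> S"
    and ex: "\<exists>n\<in>S. infinite {m\<in>T. equiv_R R m n}"
  shows "tau_injective R S T"
  unfolding tau_injective_def
proof (intro allI impI)
  fix x y assume cx: "completion_elem R S x" and cy: "completion_elem R S y" and te: "tau_eq R T x y"
  define z where "z = (\<lambda>f. x f - y f)"
  have cz: "completion_elem R S z" unfolding completion_elem_def
  proof (intro conjI ballI impI)
    fix f assume "f \<in> Phi_star S"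
    then show "coeffs_in R (z f)" unfolding z_def using cx cy unfolding completion_elem_def
      by (blast intro: ci_diff[OF R])
  next
    fix f f' assume f: "f \<in> Phi_star S" "f' \<in> Phi_star S" "dvd_in \<int> f f'"
    obtain h1 where h1: "coeffs_in R h1" "x f' - x f = f * h1"
      using cx f unfolding completion_elem_def dvd_in_def by blast
    obtain h2 where h2: "coeffs_in R h2" "y f' - y f = f * h2"
      using cy f unfolding completion_elem_def dvd_in_def by blast
    have "z f' - z f = f * (h1 - h2)" unfolding z_def using h1 h2 by (simp add: algebra_simps)
    then show "dvd_in R f (z f' - z f)" unfolding dvd_in_def using ci_diff[OF R h1(1) h2(1)] by blast
  qed
  have tau0: "\<forall>m\<in>T. Phi m dvd z (Phi m)"
    using te unfolding tau_eq_def dvd_in_def z_def by (auto intro: dvdI)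
  have R0: "R \<noteq> {0}" using sr_1[OF R] by auto
  obtain n where nS: "n \<in> S" and inf: "infinite {m\<in>T. equiv_R R m n}" using ex by blast
  have Kn: "KK z n" using init[OF R S0 cz alg R0 TS tau0 nS inf] using KK_def[OF R S0 cz] by simp
  have allK: "\<forall>s\<in>S. KK z s"
  proof
    fix s assume sS: "s \<in> S"
    have "(\<lambda>u v. u \<in> S \<and> v \<in> S \<and> equiv_R R u v)\<^sup>*\<^sup>* n s" using conn nS sS unfolding equiv_R_connected_def by blast
    then show "KK z s"
    proof (induction rule: rtranclp_induct)
      case base then show ?case using Kn .
    next
      case (step u w)
      then have uS: "u \<in> S" and wS: "w \<in> S" and e: "equiv_R R u w" by auto
      show ?case
      proof (cases "u = w")
        case True then show ?thesis using step by simp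
      next
        case False
        then obtain p k where pk: "prime p" "p_adically_separated R p" "u = w * p ^ k \<or> w = u * p ^ k"
          using e R0 unfolding equiv_R_def by blast
        show ?thesis by (rule propagate[OF R S0 cz uS wS step.IH pk])
      qed
    qed
  qed
  show "completion_eq R S x y" unfolding completion_eq_def
  proof
    fix f assume f: "f \<in> Phi_star S"
    have fd: "f dvd z f" using fin[OF R S0 cz allK f] .
    have fm: "lead_coeff f = 1" "Zp f" using ps_monic_Z[OF f S0] by auto
    have "dvd_in R f (z f)"
      using dvd_in_iff[OF R fm(1) ci_Ints[OF R fm(2)] zR[OF R S0 cz f]] fd by blast
    then show "dvd_in R f (x f - y f)" unfolding z_def .
  qed
qed

theorem theorem6p1:
  shows
   "(\<forall>(R::complex set) (S::nat set) T.
       subring_C R \<and> (\<forall>x\<in>R. algebraic x) \<and> 0 \<notin> S \<and> equiv_R_connected R S \<and> T \<subseteq> S \<and>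
       (\<exists>n\<in>S. infinite {m\<in>T. equiv_R R m n})
       \<longrightarrow> tau_injective R S T)
  \<and> (\<forall>(R::complex set) (T::nat set).
       subring_C R \<and> (\<forall>x\<in>R. algebraic_int x) \<and> 0 \<notin> T \<and>
       infinite {m\<in>T. \<exists>p k. prime p \<and> k \<ge> 1 \<and> m = p ^ k}
       \<longrightarrow> tau_injective R {n. n \<ge> 1} T)"
proof (intro conjI allI impI)
  fix R :: "complex set" and S :: "nat set" and T
  assume "subring_C R \<and> (\<forall>x\<in>R. algebraic x) \<and> 0 \<notin> S \<and> equiv_R_connected R S \<and> T \<subseteq> S \<and>
       (\<exists>n\<in>S. infinite {m\<in>T. equiv_R R m n})"
  then show "tau_injective R S T" using part1 by blast
next
  fix R :: "complex set" and T :: "nat set"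
  assume H: "subring_C R \<and> (\<forall>x\<in>R. algebraic_int x) \<and> 0 \<notin> T \<and>
       infinite {m\<in>T. \<exists>p k. prime p \<and> k \<ge> 1 \<and> m = p ^ k}"
  then have R: "subring_C R" and ai: "\<forall>x\<in>R. algebraic_int x" and T0: "0 \<notin> T"
    and inf: "infinite {m\<in>T. \<exists>p k. prime p \<and> k \<ge> 1 \<and> m = p ^ k}" by auto
  have sep: "\<forall>p. prime p \<longrightarrow> p_adically_separated R p" using algint_sep[OF R ai] by blast
  have alg: "\<forall>x\<in>R. algebraic x" using ai by blast
  have TS: "T \<subseteq> {n. n \<ge> 1}" using T0 by (auto simp: Suc_le_eq intro: gr0I)
  have sub: "{m\<in>T. \<exists>p k. prime p \<and> k \<ge> 1 \<and> m = p ^ k} \<subseteq> {m\<in>T. equiv_R R m 1}"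
    unfolding equiv_R_def using sep by auto
  have "infinite {m\<in>T. equiv_R R m 1}" using infinite_super[OF sub inf] .
  then show "tau_injective R {n. n \<ge> 1} T"
    using part1[OF R alg _ conn_all[OF sep] TS] by auto
qed


end
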